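(* Assume (A1)–(A8) and consider the sequences generated by Algorithm PS. Then: (a) there exists $\xi>0$ with $\pi_k=\gamma^{-1}\|v^k\|^2+\sum_{i=1}^{n-1}\|u_i^k\|^2\le\xi^2$ for all $k\ge0$; (b) $G_iz^k-x_i^k\to0$ and $w_i^k-y_i^k\to0$ (strongly) for $i=1,\dots,n$; (c) $\sum_{i=1}^nG_i^*y_i^k\to0$ and $x_i^k-G_ix_n^k\to0$ (strongly) for $i=1,\dots,n-1$.
   Context: Standing setting. Let $\mathcal H_0,\dots,\mathcal H_{n-1}$ be real Hilbert spaces ($n\ge2$) and $\mathcal H_n:=\mathcal H_0$. Conventions: $0\cdot\infty=0$, $r\cdot\infty=\infty$ for $r>0$, $1/\infty=0$, $1/0=\infty$. For each $i=1,\dots,n$: (A1) $G_i:\mathcal H_0\to\mathcal H_i$ is bounded linear and $G_n=I$; (A2) $A_i:\mathcal H_i\rightrightarrows\mathcal H_i$ is maximal monotone; (A3) $B_i:\mathcal H_i\to\mathcal H_i$ is monotone and $\ell_i$-Lipschitz, $\ell_i\in[0,\infty)$; (A4) $C_i:\mathcal H_i\to\mathcal H_i$ is $\beta_i$-cocoercive with $\beta_i\in(0,\infty]$, i.e. $\langle x-y,C_ix-C_iy\rangle\ge\beta_i\|C_ix-C_iy\|^2$ for all $x,y$ (so $\beta_i=\infty$ means $C_i$ is constant, and then $1/(4\beta_i)=0$); (A5) $D_i:\mathcal H_i\to\mathcal H_i$ is monotone and continuously differentiable with $\|D_i'(x)-D_i'(y)\|\le m_i\|x-y\|$ for all $x,y$,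 $m_i\in[0,\infty)$; (A6) with $T_i:=A_i+B_i+C_i+D_i$, the inclusion $0\in\sum_{i=1}^nG_i^*T_i(G_iz)$ has at least one solution $z\in\mathcal H_0$; (A7) there is $\mathcal I_D\subset\{1,\dots,n\}$ with $m_i>0$ for $i\in\mathcal I_D$ and $m_i=0$, $D_i=0$ for $i\notin\mathcal I_D$. Notation: $D_{i,(u)}(x):=D_i(u)+D_i'(u)(x-u)$; for a maximal monotone $S$, $J_S:=(S+I)^{-1}$. $\boldsymbol{\mathcal H}:=\mathcal H_0\times\mathcal H_1\times\cdots\times\mathcal H_{n-1}$ with inner product $\langle p,\tilde p\rangle_\gamma:=\gamma\langle z,\tilde z\rangle+\sum_{i=1}^{n-1}\langle w_i,\tilde w_i\rangle$ for $p=(z,w_1,\dots,w_{n-1})$, $\tilde p=(\tilde z,\tilde w_1,\dots,\tilde w_{n-1})$, and norm $\|\cdot\|_\gamma$; for such $p$ one writes $w_n:=-\sum_{i=1}^{n-1}G_i^*w_i$. The extended solution set is $\mathcal S:=\{p\in\boldsymbol{\mathcal H}: w_i\in T_i(G_iz),\ i=1,\dots,n\}$ (with $w_n$ as just defined). Algorithm PS. Input: $(z^0,w_1^0,\dots,w_{n-1}^0)\in\boldsymbol{\mathcal H}$, $0<\underline\tau<\overline\tau<2$, $0<\underline\theta<\overline\theta<2$, $\hat\rho>0$, $\hat\delta>0$, $\gamma>0$; $w_n^0:=-\sum_{i=1}^{n-1}G_i^*w_i^0$. For $k=0,1,2,\dots$: for each $i=1,\dots,n$ define $(\rho_i^k,x_i^k,y_i^k)$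 as follows. (i) If $w_i^k\in T_i(G_iz^k)$: $\rho_i^k=\hat\rho$, $x_i^k=G_iz^k$, $y_i^k=w_i^k$. (ii) Otherwise, if $i\in\mathcal I_D$: $\rho_i^k>0$ and $x_i^k=J_{\rho_i^k(A_i+D_{i,(G_iz^k)})}\big(G_iz^k+\rho_i^kw_i^k-\rho_i^k(B_i+C_i)(G_iz^k)\big)$ satisfy $\underline\theta\le4\ell_i^2(\rho_i^k)^2+(\beta_i^{-1}+\hat\delta)\rho_i^k+(m_i\rho_i^k\|x_i^k-G_iz^k\|)^2\le\overline\theta$, and $y_i^k=\frac{G_iz^k-x_i^k}{\rho_i^k}+w_i^k+[B_i(x_i^k)-B_i(G_iz^k)]+[D_i(x_i^k)-D_{i,(G_iz^k)}(x_i^k)]$. (iii) Otherwise ($i\notin\mathcal I_D$): some $\rho_i^k>0$ is chosen, $x_i^k=J_{\rho_i^kA_i}\big(G_iz^k+\rho_i^kw_i^k-\rho_i^k(B_i+C_i)(G_iz^k)\big)$ and $y_i^k=\frac{G_iz^k-x_i^k}{\rho_i^k}+w_i^k+[B_i(x_i^k)-B_i(G_iz^k)]$. Then set $u_i^k=x_i^k-G_ix_n^k$ ($i=1,\dots,n-1$), $v^k=\sum_{i=1}^nG_i^*y_i^k$, $\varphi_k=\langle z^k,v^k\rangle+\sum_{i=1}^{n-1}\langle w_i^k,u_i^k\rangle-\sum_{i=1}^n\big[\langle x_i^k,y_i^k\rangle+\frac1{4\beta_i}\|x_i^k-G_iz^k\|^2\big]$, $\pi_k=\gamma^{-1}\|v^k\|^2+\sum_{i=1}^{n-1}\|u_i^k\|^2$.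 If $\varphi_k>0$: choose $\tau_k\in[\underline\tau,\overline\tau]$, $\alpha_k=\tau_k\varphi_k/\pi_k$, $z^{k+1}=z^k-\gamma^{-1}\alpha_kv^k$, $w_i^{k+1}=w_i^k-\alpha_ku_i^k$ ($i=1,\dots,n-1$); otherwise $z^{k+1}=z^k$, $w_i^{k+1}=w_i^k$. Finally $w_n^{k+1}=-\sum_{i=1}^{n-1}G_i^*w_i^{k+1}$. (A8): for each $i\in\{1,\dots,n\}\setminus\mathcal I_D$ there are constants $\underline\rho_i,\overline\rho_i$ with $0<\underline\rho_i\le\rho_i^k\le\overline\rho_i<1/\big(\frac1{4\beta_i}+\ell_i\big)$ for all $k\ge0$ whenever $\rho_i^k$ is chosen in case (iii). *)

theory Defs
  imports "HOL-Analysis.Analysis"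
begin

text \<open>Hilbert spaces H_i are modelled as closed linear subspaces of one ambient
real Hilbert space (type of class real_inner + complete_space).\<close>

definition mono_op :: "'a::real_inner set \<Rightarrow> ('a \<Rightarrow> 'a set) \<Rightarrow> bool" where
  "mono_op H S \<longleftrightarrow> (\<forall>x. S x \<noteq> {} \<longrightarrow> x \<in> H) \<and> (\<forall>x\<in>H. S x \<subseteq> H) \<and>
     (\<forall>x y p q. p \<in> S x \<longrightarrow> q \<in> S y \<longrightarrow> 0 \<le> inner (x - y) (p - q))"

definition max_mono_op :: "'a::real_inner set \<Rightarrow> ('a \<Rightarrow> 'a set) \<Rightarrow> bool" where
  "max_mono_op H S \<longleftrightarrow> mono_op H S \<and>
     (\<forall>S'. mono_op H S' \<and> (\<forall>x. S x \<subseteq> S' x) \<longrightarrow> S' = S)"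

definition mono_fun :: "'a::real_inner set \<Rightarrow> ('a \<Rightarrow> 'a) \<Rightarrow> bool" where
  "mono_fun H F \<longleftrightarrow> (\<forall>x\<in>H. F x \<in> H) \<and> (\<forall>x\<in>H. \<forall>y\<in>H. 0 \<le> inner (x - y) (F x - F y))"

text \<open>beta-cocoercive with beta in (0, infinity], using extended-real arithmetic
(in ereal, infinity * 0 = 0 and infinity * r = infinity for r > 0).\<close>
definition cocoercive :: "'a::real_inner set \<Rightarrow> ereal \<Rightarrow> ('a \<Rightarrow> 'a) \<Rightarrow> bool" where
  "cocoercive H b F \<longleftrightarrow> (\<forall>x\<in>H. F x \<in> H) \<and>
     (\<forall>x\<in>H. \<forall>y\<in>H. b * ereal ((norm (F x - F y))\<^sup>2) \<le> ereal (inner (x - y) (F x - F y)))"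

definition op_sum :: "('a::real_vector \<Rightarrow> 'a set) \<Rightarrow> ('a \<Rightarrow> 'a) \<Rightarrow> ('a \<Rightarrow> 'a) \<Rightarrow> ('a \<Rightarrow> 'a) \<Rightarrow> 'a \<Rightarrow> 'a set" where
  "op_sum S F1 F2 F3 = (\<lambda>x. (\<lambda>s. s + F1 x + F2 x + F3 x) ` S x)"

definition op_add :: "('a::real_vector \<Rightarrow> 'a set) \<Rightarrow> ('a \<Rightarrow> 'a) \<Rightarrow> 'a \<Rightarrow> 'a set" where
  "op_add S F = (\<lambda>x. (\<lambda>s. s + F x) ` S x)"

definition op_scale :: "real \<Rightarrow> ('a::real_vector \<Rightarrow> 'a set) \<Rightarrow> 'a \<Rightarrow> 'a set" where
  "op_scale r S = (\<lambda>x. (\<lambda>s. r *\<^sub>R s) ` S x)"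

text \<open>Resolvent J_S = (S + I)^{-1}, as a set-valued map.\<close>
definition resolvent :: "('a::real_vector \<Rightarrow> 'a set) \<Rightarrow> 'a \<Rightarrow> 'a set" where
  "resolvent S r = {x. r \<in> (\<lambda>s. s + x) ` S x}"

definition lin_at :: "('a::real_vector \<Rightarrow> 'a) \<Rightarrow> ('a \<Rightarrow> 'a \<Rightarrow> 'a) \<Rightarrow> 'a \<Rightarrow> 'a \<Rightarrow> 'a" where
  "lin_at F F' u = (\<lambda>x. F u + F' u (x - u))"

end

theory Submission
  imports Defs
begin


lemma taylor_bound:
  fixes F :: "'a::real_inner \<Rightarrow> 'a" and F' :: "'a \<Rightarrow> 'a \<Rightarrow> 'a"
  assumes S: "subspace S"
    and der: "\<forall>p\<in>S. (F has_derivative F' p) (at p within S)"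
    and lip: "\<forall>p\<in>S. \<forall>q\<in>S. \<forall>h\<in>S. norm (F' p h - F' q h) \<le> M * norm (p - q) * norm h"
    and u: "u \<in> S" and x: "x \<in> S"
  shows "norm (F x - (F u + F' u (x - u))) \<le> M / 2 * (norm (x - u))\<^sup>2"
proof -
  define e where "e = x - u"
  have e: "e \<in> S" using S u x by (simp add: e_def subspace_diff)
  have seg: "\<And>t. u + t *\<^sub>R e \<in> S" using S u e by (simp add: subspace_add subspace_scale)
  have bl: "\<And>p. p \<in> S \<Longrightarrow> bounded_linear (F' p)"
    using der has_derivative_bounded_linear by blast
  define f where "f = (\<lambda>t::real. F (u + t *\<^sub>R e) - t *\<^sub>R F' u e)"
  define f' where "f' = (\<lambda>t::real. F' (u + t *\<^sub>R e) e - F' u e)"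
  define \<phi> where "\<phi> = (\<lambda>t::real. M * (norm e)\<^sup>2 * t\<^sup>2 / 2)"
  define \<phi>' where "\<phi>' = (\<lambda>t::real. M * (norm e)\<^sup>2 * t)"
  have fd: "(f has_vector_derivative f' t) (at t)" for t
  proof -
    have g: "((\<lambda>t. u + t *\<^sub>R e) has_derivative (\<lambda>h. h *\<^sub>R e)) (at t)"
      by (auto intro!: derivative_eq_intros)
    have Fd: "(F has_derivative F' (u + t *\<^sub>R e)) (at (u + t *\<^sub>R e) within range (\<lambda>t. u + t *\<^sub>R e))"
      using der seg by (meson has_derivative_subset image_subset_iff)
    have c: "((\<lambda>t. F (u + t *\<^sub>R e)) has_derivative (\<lambda>h. F' (u + t *\<^sub>R e) (h *\<^sub>R e))) (at t)"
      using diff_chain_within[OF g Fd]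
      by (simp add: o_def image_def full_SetCompr_eq)
    have lin: "F' (u + t *\<^sub>R e) (h *\<^sub>R e) = h *\<^sub>R F' (u + t *\<^sub>R e) e" for h
      using bl[OF seg] linear_scale[OF bounded_linear.linear] by (metis linear_cmul)
    have c2: "((\<lambda>t. F (u + t *\<^sub>R e)) has_derivative (\<lambda>h. h *\<^sub>R F' (u + t *\<^sub>R e) e)) (at t)"
      using c lin by simp
    show ?thesis unfolding f_def f'_def has_vector_derivative_def
      by (rule derivative_eq_intros c2 | simp add: algebra_simps)+
  qed
  have cont: "continuous_on {0..1} f"
    using fd by (meson continuous_at_imp_continuous_on has_vector_derivative_continuous)
  have pd: "(\<phi> has_vector_derivative \<phi>' t) (at t)" for t
    unfolding \<phi>_def \<phi>'_def has_vector_derivative_def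
    by (auto intro!: derivative_eq_intros simp: algebra_simps)
  have pcont: "continuous_on {0..1} \<phi>"
    unfolding \<phi>_def by (intro continuous_intros) auto
  have bnd: "norm (f' t) \<le> \<phi>' t" if "0 < t" for t
  proof -
    have "norm (f' t) \<le> M * norm (u + t *\<^sub>R e - u) * norm e"
      unfolding f'_def using lip seg u e by blast
    also have "\<dots> = \<phi>' t" using that by (simp add: \<phi>'_def power2_eq_square)
    finally show ?thesis .
  qed
  have "norm (f 1 - f 0) \<le> \<phi> 1 - \<phi> 0"
    by (rule differentiable_bound_general[OF _ cont pcont fd pd bnd]) auto
  moreover have "f 1 - f 0 = F x - (F u + F' u (x - u))"
    by (simp add: f_def e_def algebra_simps)
  moreover have "\<phi> 1 - \<phi> 0 = M / 2 * (norm (x - u))\<^sup>2" by (simp add: \<phi>_def e_def)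
  ultimately show ?thesis by simp
qed


lemma ereal_beta:
  assumes "0 < (b::ereal)"
  shows "real_of_ereal (1/(4*b)) = real_of_ereal (inverse b)/4 \<and> 0 \<le> real_of_ereal (inverse b)"
proof (cases b)
  case (real r) with assms show ?thesis by (simp add: divide_ereal_def)
next
  case PInf then show ?thesis by (simp add: divide_ereal_def)
next
  case MInf with assms show ?thesis by simp
qed

lemma ereal_A8:
  assumes "0 < (b::ereal)" "0 \<le> l" "ereal r < 1/(1/(4*b) + ereal l)"
  shows "r * (real_of_ereal (inverse b)/4 + l) < 1"
proof (cases b)
  case (real rb)
  then have rb: "rb > 0" using assms by simp
  show ?thesis
  proof (cases "1/(4*rb) + l = 0")
    case True
    then have "l = 0" "1/(4*rb) = 0" using rb assms(2) by (smt (verit) divide_pos_pos)+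
    then show ?thesis using rb by simp
  next
    case False
    then have pos: "1/(4*rb) + l > 0" using rb assms(2) by (smt (verit) divide_pos_pos)
    have "1/(4*b) + ereal l = ereal (1/(4*rb) + l)" using real rb by (simp add: divide_ereal_def inverse_eq_divide)
    then have "ereal r < ereal (1 / (1/(4*rb) + l))" using assms(3) pos by (simp add: divide_ereal_def inverse_eq_divide)
    then have "r < 1 / (1/(4*rb) + l)" by simp
    then have "r * (1/(4*rb) + l) < 1" using pos by (simp add: field_simps)
    then show ?thesis using real rb by (simp add: field_simps inverse_eq_divide)
  qed
next
  case PInf
  show ?thesis
  proof (cases "l = 0")
    case True then show ?thesis using PInf by simp
  next
    case False
    then have "ereal r < ereal (1/l)" using assms PInf by (simp add: divide_ereal_def inverse_eq_divide)
    then show ?thesis using PInf False assms(2) by (simp add: field_simps inverse_eq_divide)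
  qed
next
  case MInf with assms show ?thesis by simp
qed

lemma coco_real:
  assumes "0 < (b::ereal)" "cocoercive H b C" "p \<in> H" "s \<in> H"
  shows "(norm (C p - C s))\<^sup>2 \<le> real_of_ereal (inverse b) * inner (p - s) (C p - C s) \<and> 0 \<le> inner (p - s) (C p - C s)"
proof -
  have h: "b * ereal ((norm (C p - C s))\<^sup>2) \<le> ereal (inner (p - s) (C p - C s))"
    using assms unfolding cocoercive_def by blast
  show ?thesis
  proof (cases b)
    case (real rb)
    then have rb: "rb > 0" using assms by simp
    have "rb * (norm (C p - C s))\<^sup>2 \<le> inner (p - s) (C p - C s)" using h real by simp
    moreover have "0 \<le> rb * (norm (C p - C s))\<^sup>2" using rb by simp
    ultimately have "0 \<le> inner (p - s) (C p - C s)" by linarith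
    moreover have "(norm (C p - C s))\<^sup>2 \<le> real_of_ereal (inverse b) * inner (p - s) (C p - C s)"
      using \<open>rb * _ \<le> _\<close> real rb by (simp add: field_simps inverse_eq_divide)
    ultimately show ?thesis by simp
  next
    case PInf
    show ?thesis
    proof (cases "C p - C s = 0")
      case True then show ?thesis using h PInf by simp
    next
      case False
      then have "(norm (C p - C s))\<^sup>2 > 0" by simp
      then have "b * ereal ((norm (C p - C s))\<^sup>2) = \<infinity>" using PInf by simp
      then show ?thesis using h by simp
    qed
  next
    case MInf with assms show ?thesis by simp
  qed
qed

lemma coco_key:
  assumes "0 < (b::ereal)" "cocoercive H b C" "p \<in> H" "s \<in> H"
  shows "0 \<le> inner (x - s) (C p - C s) + real_of_ereal (inverse b) / 4 * (norm (x - p))\<^sup>2"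
proof -
  define bi where "bi = real_of_ereal (inverse b)"
  define c where "c = C p - C s"
  have h: "(norm c)\<^sup>2 \<le> bi * inner (p - s) c" "0 \<le> inner (p - s) c" "0 \<le> bi"
    using coco_real[OF assms] ereal_beta[OF assms(1)] by (auto simp: bi_def c_def)
  have split: "inner (x - s) c = inner (x - p) c + inner (p - s) c"
    by (simp add: inner_diff_left)
  have cs: "- (norm (x - p) * norm c) \<le> inner (x - p) c"
    using Cauchy_Schwarz_ineq2[of "x-p" c] by (simp add: abs_le_iff)
  show ?thesis
  proof (cases "bi = 0")
    case True
    then have "c = 0" using h by simp
    then show ?thesis using True unfolding bi_def c_def by simp
  next
    case False
    then have bp: "bi > 0" using h by simp
    have "(norm c)\<^sup>2 / bi \<le> inner (p - s) c" using h bp by (simp add: field_simps)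
    moreover have "norm (x - p) * norm c \<le> bi/4 * (norm (x - p))\<^sup>2 + (norm c)\<^sup>2 / bi"
    proof -
      have e: "bi * (bi/4 * (norm (x - p))\<^sup>2 + (norm c)\<^sup>2 / bi - norm (x - p) * norm c) = (bi * norm (x - p) / 2 - norm c)\<^sup>2"
        using bp by (simp add: field_simps power2_eq_square)
      have "0 \<le> bi * (bi/4 * (norm (x - p))\<^sup>2 + (norm c)\<^sup>2 / bi - norm (x - p) * norm c)"
        unfolding e by simp
      then show ?thesis using bp by (simp add: zero_le_mult_iff)
    qed
    ultimately show ?thesis unfolding bi_def[symmetric] c_def[symmetric] split using cs by linarith
  qed
qed

lemma resolvent_add:
  "x \<in> resolvent (op_scale \<rho> (op_add A L)) r \<Longrightarrow> \<exists>a\<in>A x. r = \<rho> *\<^sub>R (a + L x) + x"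
  by (auto simp: resolvent_def op_scale_def op_add_def)

lemma resolvent_plain:
  "x \<in> resolvent (op_scale \<rho> A) r \<Longrightarrow> \<exists>a\<in>A x. r = \<rho> *\<^sub>R a + x"
  by (auto simp: resolvent_def op_scale_def)

lemma mm_dom: "max_mono_op H A \<Longrightarrow> a \<in> A x \<Longrightarrow> x \<in> H \<and> a \<in> H"
  unfolding max_mono_op_def mono_op_def by blast

lemma mm_mono: "max_mono_op H A \<Longrightarrow> a \<in> A x \<Longrightarrow> b \<in> A y \<Longrightarrow> 0 \<le> inner (x - y) (a - b)"
  unfolding max_mono_op_def mono_op_def by blast

lemma finite_upper_aux:
  assumes "finite I" "\<forall>i\<in>I. \<exists>K. \<forall>K'\<ge>K. P i (K'::real)"
  shows "\<exists>K. \<forall>i\<in>I. \<forall>K'\<ge>K. P i K'"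
  using assms
proof (induction I rule: finite_induct)
  case empty then show ?case by simp
next
  case (insert j I)
  then obtain K where K: "\<forall>i\<in>I. \<forall>K'\<ge>K. P i K'" by auto
  obtain K2 where K2: "\<forall>K'\<ge>K2. P j K'" using insert.prems by auto
  show ?case using K K2 by (rule_tac x="max K K2" in exI) auto
qed

lemma finite_upper:
  assumes "finite I" "\<forall>i\<in>I. \<exists>K. \<forall>K'\<ge>K. P i (K'::real)"
  shows "\<exists>K. \<forall>i\<in>I. P i K"
  using finite_upper_aux[OF assms] by blast

lemma finite_lower_aux:
  assumes "finite I" "\<forall>i\<in>I. \<exists>e>0. \<forall>e'. 0 < e' \<and> e' \<le> e \<longrightarrow> P i (e'::real)"
  shows "\<exists>e>0. \<forall>i\<in>I. \<forall>e'. 0 < e' \<and> e' \<le> e \<longrightarrow> P i e'"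
  using assms
proof (induction I rule: finite_induct)
  case empty then show ?case by (rule_tac x=1 in exI) simp
next
  case (insert j I)
  then obtain e where e: "e > 0" "\<forall>i\<in>I. \<forall>e'. 0 < e' \<and> e' \<le> e \<longrightarrow> P i e'" by auto
  obtain e2 where e2: "e2 > 0" "\<forall>e'. 0 < e' \<and> e' \<le> e2 \<longrightarrow> P j e'" using insert.prems by auto
  show ?case using e e2 by (rule_tac x="min e e2" in exI) auto
qed

lemma finite_lower:
  assumes "finite I" "\<forall>i\<in>I. \<exists>e>0. \<forall>e'. 0 < e' \<and> e' \<le> e \<longrightarrow> P i (e'::real)"
  shows "\<exists>e>0. \<forall>i\<in>I. P i e"
  using finite_lower_aux[OF assms] by blast



lemma null_cmp:
  fixes f :: "nat \<Rightarrow> 'b::real_normed_vector"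
  assumes "\<And>k. norm (f k) \<le> g k" "g \<longlonglongrightarrow> 0"
  shows "f \<longlonglongrightarrow> 0"
  using Lim_null_comparison[of f g sequentially] assms by (simp add: always_eventually)


lemma bracket_bound:
  fixes a b c \<theta> :: real
  assumes "0 \<le> a" "0 \<le> b" "0 \<le> c" "4 * a\<^sup>2 + b\<^sup>2 + c \<le> \<theta>" "\<theta> < 2"
  shows "1 - sqrt (\<theta> / 2) \<le> 1 - a - b / 2 - c / 4"
proof -
  define T where "T = sqrt (\<theta> / 2)"
  define t where "t = a + b / 2"
  have th0: "0 \<le> \<theta>" using assms by (smt (verit) zero_le_power2)
  have T2: "T\<^sup>2 = \<theta> / 2" using th0 unfolding T_def by simp
  have T0: "0 \<le> T" unfolding T_def using th0 by simp
  have T1: "T < 1" unfolding T_def using assms(5) by simp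
  have tt: "t\<^sup>2 \<le> (4 * a\<^sup>2 + b\<^sup>2) / 2"
  proof -
    have "(4 * a\<^sup>2 + b\<^sup>2) / 2 - t\<^sup>2 = (a - b / 2)\<^sup>2" unfolding t_def by (simp add: power2_eq_square field_simps)
    then show ?thesis by (smt (verit) zero_le_power2)
  qed
  have t0: "0 \<le> t" unfolding t_def using assms by simp
  have "4 * a\<^sup>2 + b\<^sup>2 \<le> \<theta>" using assms(3,4) by linarith
  then have "(4 * a\<^sup>2 + b\<^sup>2) / 2 \<le> \<theta> / 2" by simp
  then have "t\<^sup>2 \<le> T\<^sup>2" using tt unfolding T2 by linarith
  then have tT: "t \<le> T" using t0 T0 by (simp add: power2_le_iff_abs_le)
  have "2 * t\<^sup>2 \<le> 4 * a\<^sup>2 + b\<^sup>2" using tt by simp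
  then have c: "c \<le> \<theta> - 2 * t\<^sup>2" using assms(4) by linarith
  have "0 \<le> (T - t) * (1 - (T + t) / 2)" using tT T1 by (intro mult_nonneg_nonneg) auto
  then have "1 - T \<le> 1 - t - (\<theta> - 2 * t\<^sup>2) / 4" using T2 by (simp add: field_simps power2_eq_square)
  moreover have "c / 4 \<le> (\<theta> - 2 * t\<^sup>2) / 4" using c by simp
  ultimately have "1 - T \<le> 1 - t - c / 4" by linarith
  then show ?thesis unfolding T_def[symmetric] t_def by simp
qed


lemma norm_step: "(norm (a - c *\<^sub>R b))\<^sup>2 = (norm a)\<^sup>2 - 2 * c * inner a b + c\<^sup>2 * (norm (b::'a::real_inner))\<^sup>2"
  unfolding power2_norm_eq_inner by (simp add: inner_diff_left inner_diff_right inner_commute power2_eq_square algebra_simps)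


lemma solve_res:
  fixes p w b c v x :: "'a::real_vector"
  assumes "\<rho> \<noteq> 0" "p + \<rho> *\<^sub>R w - \<rho> *\<^sub>R (b + c) = \<rho> *\<^sub>R v + x"
  shows "(1/\<rho>) *\<^sub>R (p - x) = v - w + b + c"
proof -
  have "p - x = \<rho> *\<^sub>R (v - w + b + c)"
    using assms(2) by (simp add: algebra_simps)
  then show ?thesis using assms(1) by simp
qed


locale PS =
  fixes n :: nat
    and H :: "nat \<Rightarrow> 'a::{real_inner,complete_space} set"
    and G Gadj :: "nat \<Rightarrow> 'a \<Rightarrow> 'a"
    and A :: "nat \<Rightarrow> 'a \<Rightarrow> 'a set"
    and B C D :: "nat \<Rightarrow> 'a \<Rightarrow> 'a"
    and D' :: "nat \<Rightarrow> 'a \<Rightarrow> 'a \<Rightarrow> 'a"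
    and ell m :: "nat \<Rightarrow> real"
    and beta :: "nat \<Rightarrow> ereal"
    and ID :: "nat set"
    and z :: "nat \<Rightarrow> 'a"
    and w x y u :: "nat \<Rightarrow> nat \<Rightarrow> 'a"
    and rho :: "nat \<Rightarrow> nat \<Rightarrow> real"
    and v :: "nat \<Rightarrow> 'a"
    and phi pik tau alpha :: "nat \<Rightarrow> real"
    and tau_lo tau_up theta_lo theta_up rho_hat delta_hat gamma :: real
  assumes n2: "n \<ge> 2"
    and H_sub: "\<forall>i\<le>n. subspace (H i) \<and> closed (H i)"
    and H_n: "H n = H 0"
    and A1: "\<forall>i\<in>{1..n}. bounded_linear (G i) \<and> G i ` H 0 \<subseteq> H i"
    and A1n: "\<forall>p\<in>H 0. G n p = p"
    and adj: "\<forall>i\<in>{1..n}. \<forall>q\<in>H i. Gadj i q \<in> H 0 \<and>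
                (\<forall>p\<in>H 0. inner (Gadj i q) p = inner q (G i p))"
    and A2: "\<forall>i\<in>{1..n}. max_mono_op (H i) (A i)"
    and A3: "\<forall>i\<in>{1..n}. mono_fun (H i) (B i) \<and> 0 \<le> ell i \<and>
                (\<forall>p\<in>H i. \<forall>q\<in>H i. norm (B i p - B i q) \<le> ell i * norm (p - q))"
    and A4: "\<forall>i\<in>{1..n}. 0 < beta i \<and> cocoercive (H i) (beta i) (C i)"
    and A5: "\<forall>i\<in>{1..n}. mono_fun (H i) (D i) \<and> 0 \<le> m i \<and>
                (\<forall>p\<in>H i. (D i has_derivative D' i p) (at p within H i)) \<and>
                (\<forall>p\<in>H i. \<forall>q\<in>H i. \<forall>h\<in>H i.
                    norm (D' i p h - D' i q h) \<le> m i * norm (p - q) * norm h)"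
    and A6: "\<exists>zs\<in>H 0. \<exists>ws. (\<forall>i\<in>{1..n}. ws i \<in> op_sum (A i) (B i) (C i) (D i) (G i zs)) \<and>
                (\<Sum>i=1..n. Gadj i (ws i)) = 0"
    and A7: "ID \<subseteq> {1..n} \<and> (\<forall>i\<in>ID. 0 < m i) \<and>
                (\<forall>i\<in>{1..n} - ID. m i = 0 \<and> (\<forall>p\<in>H i. D i p = 0))"
    and params: "0 < tau_lo \<and> tau_lo < tau_up \<and> tau_up < 2 \<and>
                 0 < theta_lo \<and> theta_lo < theta_up \<and> theta_up < 2 \<and>
                 0 < rho_hat \<and> 0 < delta_hat \<and> 0 < gamma"
    and init: "z 0 \<in> H 0 \<and> (\<forall>i\<in>{1..n-1}. w 0 i \<in> H i)"
    and w_n: "\<forall>k. w k n = - (\<Sum>i=1..n-1. Gadj i (w k i))"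
    and case_i: "\<forall>k. \<forall>i\<in>{1..n}. w k i \<in> op_sum (A i) (B i) (C i) (D i) (G i (z k)) \<longrightarrow>
                   rho k i = rho_hat \<and> x k i = G i (z k) \<and> y k i = w k i"
    and case_ii: "\<forall>k. \<forall>i\<in>ID. w k i \<notin> op_sum (A i) (B i) (C i) (D i) (G i (z k)) \<longrightarrow>
                   0 < rho k i \<and>
                   x k i \<in> resolvent (op_scale (rho k i) (op_add (A i) (lin_at (D i) (D' i) (G i (z k)))))
                      (G i (z k) + rho k i *\<^sub>R w k i - rho k i *\<^sub>R (B i (G i (z k)) + C i (G i (z k)))) \<and>
                   theta_lo \<le> 4 * (ell i)\<^sup>2 * (rho k i)\<^sup>2 + (real_of_ereal (inverse (beta i)) + delta_hat) * rho k i
                              + (m i * rho k i * norm (x k i - G i (z k)))\<^sup>2 \<and>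
                   4 * (ell i)\<^sup>2 * (rho k i)\<^sup>2 + (real_of_ereal (inverse (beta i)) + delta_hat) * rho k i
                              + (m i * rho k i * norm (x k i - G i (z k)))\<^sup>2 \<le> theta_up \<and>
                   y k i = (1 / rho k i) *\<^sub>R (G i (z k) - x k i) + w k i
                           + (B i (x k i) - B i (G i (z k)))
                           + (D i (x k i) - lin_at (D i) (D' i) (G i (z k)) (x k i))"
    and case_iii: "\<forall>k. \<forall>i\<in>{1..n} - ID. w k i \<notin> op_sum (A i) (B i) (C i) (D i) (G i (z k)) \<longrightarrow>
                   0 < rho k i \<and>
                   x k i \<in> resolvent (op_scale (rho k i) (A i))
                      (G i (z k) + rho k i *\<^sub>R w k i - rho k i *\<^sub>R (B i (G i (z k)) + C i (G i (z k)))) \<and>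
                   y k i = (1 / rho k i) *\<^sub>R (G i (z k) - x k i) + w k i
                           + (B i (x k i) - B i (G i (z k)))"
    and u_def: "\<forall>k. \<forall>i\<in>{1..n-1}. u k i = x k i - G i (x k n)"
    and v_def: "\<forall>k. v k = (\<Sum>i=1..n. Gadj i (y k i))"
    and phi_def: "\<forall>k. phi k = inner (z k) (v k) + (\<Sum>i=1..n-1. inner (w k i) (u k i))
                   - (\<Sum>i=1..n. inner (x k i) (y k i)
                        + real_of_ereal (1 / (4 * beta i)) * (norm (x k i - G i (z k)))\<^sup>2)"
    and pi_def: "\<forall>k. pik k = (1 / gamma) * (norm (v k))\<^sup>2 + (\<Sum>i=1..n-1. (norm (u k i))\<^sup>2)"
    and update: "\<forall>k. (0 < phi k \<longrightarrow>
                      tau_lo \<le> tau k \<and> tau k \<le> tau_up \<and> alpha k = tau k * phi k / pik k \<and>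
                      z (Suc k) = z k - (alpha k / gamma) *\<^sub>R v k \<and>
                      (\<forall>i\<in>{1..n-1}. w (Suc k) i = w k i - alpha k *\<^sub>R u k i)) \<and>
                    (\<not> 0 < phi k \<longrightarrow> z (Suc k) = z k \<and> (\<forall>i\<in>{1..n-1}. w (Suc k) i = w k i))"
    and A8: "\<forall>i\<in>{1..n} - ID. \<exists>rlo rup. 0 < rlo \<and> rlo \<le> rup \<and>
                ereal rup < 1 / (1 / (4 * beta i) + ereal (ell i)) \<and>
                (\<forall>k. w k i \<notin> op_sum (A i) (B i) (C i) (D i) (G i (z k)) \<longrightarrow>
                      rlo \<le> rho k i \<and> rho k i \<le> rup)"
begin

lemma sub: "i \<le> n \<Longrightarrow> subspace (H i)"
  using H_sub by blast

lemma subI: "i \<in> {1..n} \<Longrightarrow> subspace (H i)"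
  using H_sub by auto

lemma n_pos: "n = Suc (n - 1)" "n - 1 \<ge> 1" using n2 by auto

lemma adj_eq: "i \<in> {1..n} \<Longrightarrow> q \<in> H i \<Longrightarrow> p \<in> H 0 \<Longrightarrow> inner (Gadj i q) p = inner q (G i p)"
  using adj by blast

lemma adj_mem: "i \<in> {1..n} \<Longrightarrow> q \<in> H i \<Longrightarrow> Gadj i q \<in> H 0"
  using adj by blast

lemma G_mem: "i \<in> {1..n} \<Longrightarrow> p \<in> H 0 \<Longrightarrow> G i p \<in> H i"
  using A1 by blast

lemma zero_H0: "a \<in> H 0 \<Longrightarrow> (\<And>p. p \<in> H 0 \<Longrightarrow> inner a p = 0) \<Longrightarrow> a = 0"
  by (metis inner_eq_zero_iff)

lemma Gadj_diff:
  assumes i: "i \<in> {1..n}" and q: "q1 \<in> H i" "q2 \<in> H i"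
  shows "Gadj i (q1 - q2) = Gadj i q1 - Gadj i q2"
proof -
  have S: "subspace (H i)" "subspace (H 0)" using i sub by auto
  have m: "q1 - q2 \<in> H i" using S q by (simp add: subspace_diff)
  have "Gadj i (q1 - q2) - (Gadj i q1 - Gadj i q2) = 0"
  proof (rule zero_H0)
    show "Gadj i (q1 - q2) - (Gadj i q1 - Gadj i q2) \<in> H 0"
      using S adj_mem[OF i] m q by (simp add: subspace_diff)
    fix p assume p: "p \<in> H 0"
    show "inner (Gadj i (q1 - q2) - (Gadj i q1 - Gadj i q2)) p = 0"
      using adj_eq[OF i _ p] m q by (simp add: inner_diff_left)
  qed
  then show ?thesis by simp
qed

lemma Gn: "p \<in> H 0 \<Longrightarrow> G n p = p" using A1n by blast

lemma Gadj_n: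
  assumes q: "q \<in> H 0"
  shows "Gadj n q = q"
proof -
  have i: "n \<in> {1..n}" using n2 by auto
  have "Gadj n q - q = 0"
  proof (rule zero_H0)
    show "Gadj n q - q \<in> H 0" using adj_mem[OF i] q H_n sub[of 0] by (simp add: subspace_diff)
    fix p assume p: "p \<in> H 0"
    show "inner (Gadj n q - q) p = 0"
      using adj_eq[OF i _ p] q H_n Gn[OF p] by (simp add: inner_diff_left)
  qed
  then show ?thesis by simp
qed

lemma G_bound: "\<exists>K>0. \<forall>i\<in>{1..n}. \<forall>p. norm (G i p) \<le> K * norm p"
proof -
  have "\<exists>K. \<forall>i\<in>{1..n}. (\<lambda>i K. K > 0 \<and> (\<forall>p. norm (G i p) \<le> K * norm p)) i K"
  proof (rule finite_upper)
    show "\<forall>i\<in>{1..n}. \<exists>K. \<forall>K'\<ge>K. K' > 0 \<and> (\<forall>p. norm (G i p) \<le> K' * norm p)"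
    proof
      fix i assume i: "i \<in> {1..n}"
      then obtain K where K: "K > 0" "\<forall>p. norm (G i p) \<le> norm p * K"
        using A1 bounded_linear.pos_bounded by blast
      show "\<exists>K. \<forall>K'\<ge>K. K' > 0 \<and> (\<forall>p. norm (G i p) \<le> K' * norm p)"
      proof (rule exI[of _ K], intro allI impI conjI)
        fix K' assume "K' \<ge> K"
        then show "K' > 0" using K by simp
        fix p show "norm (G i p) \<le> K' * norm p"
          using K \<open>K' \<ge> K\<close> by (smt (verit, best) mult.commute mult_right_mono norm_ge_zero)
      qed
    qed
  qed simp
  then obtain K where "\<forall>i\<in>{1..n}. K > 0 \<and> (\<forall>p. norm (G i p) \<le> K * norm p)" by blast
  then show ?thesis using n2 by (metis atLeastAtMost_iff le_numeral_extra(4) one_le_numeral order_trans)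
qed

lemma Gadj_bound: "\<exists>K>0. \<forall>i\<in>{1..n}. \<forall>q\<in>H i. norm (Gadj i q) \<le> K * norm q"
proof -
  obtain K where K: "K > 0" "\<forall>i\<in>{1..n}. \<forall>p. norm (G i p) \<le> K * norm p" using G_bound by blast
  have "norm (Gadj i q) \<le> K * norm q" if i: "i \<in> {1..n}" and q: "q \<in> H i" for i q
  proof -
    have "(norm (Gadj i q))\<^sup>2 = inner q (G i (Gadj i q))"
      using adj_eq[OF i q adj_mem[OF i q]] by (simp add: power2_norm_eq_inner)
    also have "\<dots> \<le> norm q * norm (G i (Gadj i q))" by (rule norm_cauchy_schwarz)
    also have "\<dots> \<le> norm q * (K * norm (Gadj i q))" using K i by (simp add: mult_left_mono)
    finally have "norm (Gadj i q) * norm (Gadj i q) \<le> (K * norm q) * norm (Gadj i q)"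
      by (simp add: power2_eq_square algebra_simps)
    then show ?thesis
      using K by (cases "norm (Gadj i q) = 0") (auto simp: mult_le_cancel_right)
  qed
  then show ?thesis using K by blast
qed


lemma step_facts:
  assumes zk: "z k \<in> H 0" and i: "i \<in> {1..n}"
  shows "x k i \<in> H i \<and> 0 < rho k i \<and>
    (\<exists>a\<in>A i (x k i). y k i = a + B i (x k i) + C i (G i (z k)) + D i (x k i)) \<and>
    (\<exists>r. y k i - w k i = (1/rho k i) *\<^sub>R (G i (z k) - x k i) + (B i (x k i) - B i (G i (z k))) + r
         \<and> norm r \<le> m i / 2 * (norm (G i (z k) - x k i))\<^sup>2)"
proof -
  define p where "p = G i (z k)"
  have p: "p \<in> H i" using G_mem[OF i zk] p_def by simp
  have S: "subspace (H i)" using subI[OF i] .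
  have mm: "max_mono_op (H i) (A i)" using A2 i by blast
  have mpos: "0 \<le> m i" using A5 i by blast
  show ?thesis
  proof (cases "w k i \<in> op_sum (A i) (B i) (C i) (D i) p")
    case True
    then have c: "rho k i = rho_hat \<and> x k i = p \<and> y k i = w k i" using case_i i p_def by blast
    from True obtain a where a: "a \<in> A i p" "w k i = a + B i p + C i p + D i p"
      unfolding op_sum_def by auto
    show ?thesis
      using c a p params mpos unfolding p_def[symmetric]
      by (auto intro!: exI[of _ 0])
  next
    case nsum: False
    show ?thesis
    proof (cases "i \<in> ID")
      case True
      define L where "L = lin_at (D i) (D' i) p"
      have c: "0 < rho k i"
        "x k i \<in> resolvent (op_scale (rho k i) (op_add (A i) L))
            (p + rho k i *\<^sub>R w k i - rho k i *\<^sub>R (B i p + C i p))"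
        "y k i = (1 / rho k i) *\<^sub>R (p - x k i) + w k i + (B i (x k i) - B i p) + (D i (x k i) - L (x k i))"
        using case_ii True nsum unfolding p_def L_def by blast+
      obtain a where a: "a \<in> A i (x k i)"
        "p + rho k i *\<^sub>R w k i - rho k i *\<^sub>R (B i p + C i p) = rho k i *\<^sub>R (a + L (x k i)) + x k i"
        using resolvent_add[OF c(2)] by blast
      have xH: "x k i \<in> H i" using mm_dom[OF mm a(1)] by simp
      have sol: "(1 / rho k i) *\<^sub>R (p - x k i) = a + L (x k i) - w k i + B i p + C i p"
        using solve_res[OF _ a(2)] c(1) by simp
      have yeq: "y k i = a + B i (x k i) + C i p + D i (x k i)"
        unfolding c(3) sol by (simp add: algebra_simps)
      have tay: "norm (D i (x k i) - L (x k i)) \<le> m i / 2 * (norm (p - x k i))\<^sup>2"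
        using taylor_bound[OF S, of "D i" "D' i" "m i" p "x k i"] A5 i p xH
        unfolding L_def lin_at_def by (simp add: norm_minus_commute)
      show ?thesis unfolding p_def[symmetric]
        using xH c(1) a(1) yeq tay c(3) by (auto intro!: exI[of _ "D i (x k i) - L (x k i)"])
    next
      case False
      have iD: "i \<in> {1..n} - ID" using False i by simp
      have c: "0 < rho k i"
        "x k i \<in> resolvent (op_scale (rho k i) (A i))
            (p + rho k i *\<^sub>R w k i - rho k i *\<^sub>R (B i p + C i p))"
        "y k i = (1 / rho k i) *\<^sub>R (p - x k i) + w k i + (B i (x k i) - B i p)"
        using case_iii iD nsum unfolding p_def by blast+
      obtain a where a: "a \<in> A i (x k i)"
        "p + rho k i *\<^sub>R w k i - rho k i *\<^sub>R (B i p + C i p) = rho k i *\<^sub>R a + x k i"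
        using resolvent_plain[OF c(2)] by blast
      have xH: "x k i \<in> H i" using mm_dom[OF mm a(1)] by simp
      have D0: "D i (x k i) = 0" using A7 iD xH by blast
      have sol: "(1 / rho k i) *\<^sub>R (p - x k i) = a - w k i + B i p + C i p"
        using solve_res[OF _ a(2)] c(1) by simp
      have yeq: "y k i = a + B i (x k i) + C i p + D i (x k i)"
        unfolding c(3) sol D0 by (simp add: algebra_simps)
      show ?thesis unfolding p_def[symmetric]
        using xH c(1) a(1) yeq c(3) mpos by (auto intro!: exI[of _ 0])
    qed
  qed
qed

lemma y_mem:
  assumes zk: "z k \<in> H 0" and i: "i \<in> {1..n}"
  shows "y k i \<in> H i"
proof -
  have S: "subspace (H i)" using subI[OF i] .
  have mm: "max_mono_op (H i) (A i)" using A2 i by blast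
  obtain a where a: "a \<in> A i (x k i)" "y k i = a + B i (x k i) + C i (G i (z k)) + D i (x k i)"
    using step_facts[OF zk i] by blast
  have xH: "x k i \<in> H i" using step_facts[OF zk i] by blast
  have "a \<in> H i" using mm_dom[OF mm a(1)] by simp
  moreover have "B i (x k i) \<in> H i" using A3 i xH unfolding mono_fun_def by blast
  moreover have "C i (G i (z k)) \<in> H i" using A4 i G_mem[OF i zk] unfolding cocoercive_def by blast
  moreover have "D i (x k i) \<in> H i" using A5 i xH unfolding mono_fun_def by blast
  ultimately show ?thesis unfolding a(2) using S by (simp add: subspace_add)
qed

lemma mem_all: "z k \<in> H 0 \<and> (\<forall>i\<in>{1..n-1}. w k i \<in> H i)"
proof (induction k)
  case 0 then show ?case using init by simp
next
  case (Suc k)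
  then have zk: "z k \<in> H 0" and wk: "\<forall>i\<in>{1..n-1}. w k i \<in> H i" by auto
  have S0: "subspace (H 0)" using sub by simp
  have vH: "v k \<in> H 0"
    unfolding v_def[rule_format] using y_mem[OF zk] adj_mem S0
    by (auto intro!: subspace_sum)
  have xn: "x k n \<in> H 0" using step_facts[OF zk, of n] n2 H_n by auto
  have uH: "u k i \<in> H i" if i: "i \<in> {1..n-1}" for i
  proof -
    have i': "i \<in> {1..n}" using i by auto
    show ?thesis using u_def i step_facts[OF zk i'] G_mem[OF i' xn] subI[OF i']
      by (simp add: subspace_diff)
  qed
  show ?case
  proof (cases "0 < phi k")
    case True
    then have "z (Suc k) = z k - (alpha k / gamma) *\<^sub>R v k"
      "\<forall>i\<in>{1..n-1}. w (Suc k) i = w k i - alpha k *\<^sub>R u k i" using update by blast+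
    moreover have "\<forall>i\<in>{1..n-1}. subspace (H i)" using sub by auto
    ultimately show ?thesis using zk vH S0 wk uH
      by (auto simp: subspace_diff subspace_scale intro!: subspace_diff subspace_scale)
  next
    case False
    then show ?thesis using update zk wk by simp
  qed
qed

lemma zH: "z k \<in> H 0" using mem_all by blast

lemma wH: "i \<in> {1..n} \<Longrightarrow> w k i \<in> H i"
proof -
  assume i: "i \<in> {1..n}"
  show ?thesis
  proof (cases "i = n")
    case True
    have "(\<Sum>i=1..n-1. Gadj i (w k i)) \<in> H 0"
      using mem_all adj_mem sub[of 0] by (auto intro!: subspace_sum)
    then show ?thesis using True w_n H_n sub[of 0] by (simp add: subspace_neg)
  next
    case False
    then show ?thesis using i mem_all by auto
  qed
qed

lemmas sf = step_facts[OF zH]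

lemma xH: "i \<in> {1..n} \<Longrightarrow> x k i \<in> H i" using sf by blast
lemma yH: "i \<in> {1..n} \<Longrightarrow> y k i \<in> H i" using y_mem[OF zH] .
lemma rho_pos: "i \<in> {1..n} \<Longrightarrow> 0 < rho k i" using sf by blast

lemma sum_split_n: "(\<Sum>i=1..n. f i) = (\<Sum>i=1..n-1. f i) + (f n :: 'b::comm_monoid_add)"
proof -
  have "(\<Sum>i=1..Suc (n-1). f i) = (\<Sum>i=1..n-1. f i) + f (Suc (n-1))"
    by (simp add: sum.cl_ivl_Suc)
  then show ?thesis using n_pos(1) by simp
qed

lemma phi_ident:
  assumes zeta: "\<zeta> \<in> H 0" and om: "\<forall>i\<in>{1..n}. \<omega> i \<in> H i"
    and sum0: "(\<Sum>i=1..n. Gadj i (\<omega> i)) = 0"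
  shows "inner \<zeta> (v k) + (\<Sum>i=1..n-1. inner (\<omega> i) (u k i)) - (\<Sum>i=1..n. inner (x k i) (y k i) + c i)
       = (\<Sum>i=1..n. inner (G i \<zeta> - x k i) (y k i - \<omega> i) - c i)"
proof -
  have nI: "n \<in> {1..n}" using n2 by auto
  have e1: "inner \<zeta> (v k) = (\<Sum>i=1..n. inner (G i \<zeta>) (y k i))"
    unfolding v_def[rule_format] inner_sum_right
    using adj_eq[OF _ yH zeta] by (simp add: inner_commute)
  have e2: "(\<Sum>i=1..n. inner (G i \<zeta>) (\<omega> i)) = 0"
  proof -
    have "(\<Sum>i=1..n. inner (G i \<zeta>) (\<omega> i)) = (\<Sum>i=1..n. inner (Gadj i (\<omega> i)) \<zeta>)"
      using adj_eq[OF _ _ zeta] om by (simp add: inner_commute)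
    also have "\<dots> = inner (\<Sum>i=1..n. Gadj i (\<omega> i)) \<zeta>" by (simp add: inner_sum_left)
    finally show ?thesis using sum0 by simp
  qed
  have xn: "x k n \<in> H 0" using xH[OF nI] H_n by simp
  have wn: "\<omega> n \<in> H 0" using om nI H_n by auto
  have s1: "(\<Sum>i=1..n-1. Gadj i (\<omega> i)) = - \<omega> n"
    using sum0 sum_split_n[of "\<lambda>i. Gadj i (\<omega> i)"] Gadj_n[OF wn] by (simp add: eq_neg_iff_add_eq_0)
  have e3: "(\<Sum>i=1..n-1. inner (\<omega> i) (u k i)) = (\<Sum>i=1..n. inner (x k i) (\<omega> i))"
  proof -
    have "(\<Sum>i=1..n-1. inner (\<omega> i) (u k i)) =
          (\<Sum>i=1..n-1. inner (\<omega> i) (x k i)) - (\<Sum>i=1..n-1. inner (Gadj i (\<omega> i)) (x k n))"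
      using u_def adj_eq[OF _ _ xn] om by (auto simp add: inner_diff_right sum_subtractf intro!: sum.cong)
    also have "(\<Sum>i=1..n-1. inner (Gadj i (\<omega> i)) (x k n)) = - inner (\<omega> n) (x k n)"
      using s1 by (simp add: inner_sum_left[symmetric])
    finally show ?thesis using sum_split_n[of "\<lambda>i. inner (x k i) (\<omega> i)"] by (simp add: inner_commute)
  qed
  show ?thesis
    unfolding e1 e3 using e2
    by (simp add: inner_diff_left inner_diff_right sum_subtractf sum.distrib inner_commute algebra_simps)
qed

definition is_sol where
  "is_sol zs ws \<longleftrightarrow> zs \<in> H 0 \<and> (\<forall>i\<in>{1..n}. ws i \<in> H i) \<and> (\<Sum>i=1..n. Gadj i (ws i)) = 0 \<and>
     (\<forall>i\<in>{1..n}. \<exists>a\<in>A i (G i zs). ws i = a + B i (G i zs) + C i (G i zs) + D i (G i zs))"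

definition cr where "cr k i = real_of_ereal (1 / (4 * beta i)) * (norm (x k i - G i (z k)))\<^sup>2"

definition PS where "PS zs ws k = (\<Sum>i=1..n. inner (G i zs - x k i) (y k i - ws i) - cr k i)"

definition NN where "NN zs ws k = gamma * (norm (z k - zs))\<^sup>2 + (\<Sum>i=1..n-1. (norm (w k i - ws i))\<^sup>2)"

lemma sol_exists: "\<exists>zs ws. is_sol zs ws"
proof -
  obtain zs ws where z: "zs \<in> H 0" and ws: "\<forall>i\<in>{1..n}. ws i \<in> op_sum (A i) (B i) (C i) (D i) (G i zs)"
    and s: "(\<Sum>i=1..n. Gadj i (ws i)) = 0" using A6 by blast
  have rep: "\<forall>i\<in>{1..n}. \<exists>a\<in>A i (G i zs). ws i = a + B i (G i zs) + C i (G i zs) + D i (G i zs)"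
    using ws unfolding op_sum_def by auto
  have "ws i \<in> H i" if i: "i \<in> {1..n}" for i
  proof -
    obtain a where a: "a \<in> A i (G i zs)" "ws i = a + B i (G i zs) + C i (G i zs) + D i (G i zs)"
      using rep i by blast
    have p: "G i zs \<in> H i" using G_mem[OF i z] .
    have mm: "max_mono_op (H i) (A i)" using A2 i by blast
    have "a \<in> H i" using mm_dom[OF mm a(1)] by simp
    moreover have "B i (G i zs) \<in> H i" using A3 i p unfolding mono_fun_def by blast
    moreover have "C i (G i zs) \<in> H i" using A4 i p unfolding cocoercive_def by blast
    moreover have "D i (G i zs) \<in> H i" using A5 i p unfolding mono_fun_def by blast
    ultimately show ?thesis unfolding a(2) using subI[OF i] by (simp add: subspace_add)
  qed
  then show ?thesis unfolding is_sol_def using z s rep by blast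
qed

lemma w_sum0: "(\<Sum>i=1..n. Gadj i (w k i)) = 0"
proof -
  have nI: "n \<in> {1..n}" using n2 by auto
  have "w k n \<in> H 0" using wH[OF nI] H_n by simp
  then show ?thesis using sum_split_n[of "\<lambda>i. Gadj i (w k i)"] Gadj_n w_n by simp
qed

lemma phi_eq: "phi k = (\<Sum>i=1..n. inner (G i (z k) - x k i) (y k i - w k i) - cr k i)"
  using phi_ident[OF zH _ w_sum0, where c = "cr k"] wH phi_def unfolding cr_def by simp

lemma phi_minus_PS:
  assumes "is_sol zs ws"
  shows "phi k - PS zs ws k = inner (z k - zs) (v k) + (\<Sum>i=1..n-1. inner (w k i - ws i) (u k i))"
proof -
  have "PS zs ws k = inner zs (v k) + (\<Sum>i=1..n-1. inner (ws i) (u k i)) - (\<Sum>i=1..n. inner (x k i) (y k i) + cr k i)"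
    unfolding PS_def using phi_ident[of zs ws k, where c = "cr k"] assms unfolding is_sol_def by simp
  then show ?thesis using phi_def unfolding cr_def
    by (simp add: inner_diff_left sum_subtractf)
qed

lemma PS_nonpos:
  assumes sol: "is_sol zs ws"
  shows "PS zs ws k \<le> 0"
proof -
  have "0 \<le> inner (x k i - G i zs) (y k i - ws i) + cr k i" if i: "i \<in> {1..n}" for i
  proof -
    define p s xx where "p = G i (z k)" and "s = G i zs" and "xx = x k i"
    have zs: "zs \<in> H 0" using sol unfolding is_sol_def by blast
    have pH: "p \<in> H i" and sH: "s \<in> H i" and xxH: "xx \<in> H i"
      using G_mem[OF i zH] G_mem[OF i zs] xH[OF i] unfolding p_def s_def xx_def by auto
    obtain a where a: "a \<in> A i xx" "y k i = a + B i xx + C i p + D i xx"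
      using sf[OF i] unfolding p_def xx_def by blast
    obtain as where as: "as \<in> A i s" "ws i = as + B i s + C i s + D i s"
      using sol i unfolding is_sol_def s_def by blast
    have mm: "max_mono_op (H i) (A i)" using A2 i by blast
    have m1: "0 \<le> inner (xx - s) (a - as)" using mm_mono[OF mm a(1) as(1)] .
    have m2: "0 \<le> inner (xx - s) (B i xx - B i s)" using A3 i xxH sH unfolding mono_fun_def by blast
    have m3: "0 \<le> inner (xx - s) (D i xx - D i s)" using A5 i xxH sH unfolding mono_fun_def by blast
    have b: "0 < beta i" "cocoercive (H i) (beta i) (C i)" using A4 i by auto
    have m4: "0 \<le> inner (xx - s) (C i p - C i s) + real_of_ereal (inverse (beta i)) / 4 * (norm (xx - p))\<^sup>2"
      using coco_key[OF b pH sH] .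
    have crr: "cr k i = real_of_ereal (inverse (beta i)) / 4 * (norm (xx - p))\<^sup>2"
      unfolding cr_def xx_def p_def using ereal_beta[OF b(1)] by simp
    have "y k i - ws i = (a - as) + (B i xx - B i s) + (D i xx - D i s) + (C i p - C i s)"
      unfolding a(2) as(2) by (simp add: algebra_simps)
    then have "inner (x k i - G i zs) (y k i - ws i) = inner (xx - s) (a - as) + inner (xx - s) (B i xx - B i s)
        + inner (xx - s) (D i xx - D i s) + inner (xx - s) (C i p - C i s)"
      unfolding xx_def s_def by (simp add: inner_add_right)
    then show ?thesis using m1 m2 m3 m4 crr by linarith
  qed
  then have "(\<Sum>i=1..n. inner (G i zs - x k i) (y k i - ws i) - cr k i) \<le> (\<Sum>i=1..n. 0::real)"
    by (intro sum_mono) (smt (verit) inner_minus_left minus_diff_eq)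
  then show ?thesis unfolding PS_def by simp
qed

lemma pik_nonneg: "0 \<le> pik k"
  using pi_def params by (auto intro!: add_nonneg_nonneg sum_nonneg)

lemma fejer:
  assumes sol: "is_sol zs ws"
  shows "NN zs ws (Suc k) \<le> NN zs ws k - (if 0 < phi k then tau_lo * (2 - tau_up) * (phi k)\<^sup>2 / pik k else 0)
         \<and> (0 < phi k \<longrightarrow> 0 < pik k)"
proof (cases "0 < phi k")
  case False
  then show ?thesis using update unfolding NN_def by simp
next
  case True
  have g: "gamma > 0" using params by simp
  define dd where "dd = inner (z k - zs) (v k) + (\<Sum>i=1..n-1. inner (w k i - ws i) (u k i))"
  have dd: "phi k - PS zs ws k = dd" using phi_minus_PS[OF sol] dd_def by simp
  have PS: "PS zs ws k \<le> 0" using PS_nonpos[OF sol] .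
  have pipos: "0 < pik k"
  proof (rule ccontr)
    assume "\<not> 0 < pik k"
    then have "pik k = 0" using pik_nonneg[of k] by simp
    then have "(1/gamma) * (norm (v k))\<^sup>2 + (\<Sum>i=1..n-1. (norm (u k i))\<^sup>2) = 0" using pi_def by simp
    moreover have "0 \<le> (1/gamma) * (norm (v k))\<^sup>2" using g by simp
    moreover have "0 \<le> (\<Sum>i=1..n-1. (norm (u k i))\<^sup>2)" by (simp add: sum_nonneg)
    ultimately have "(1/gamma) * (norm (v k))\<^sup>2 = 0" "(\<Sum>i=1..n-1. (norm (u k i))\<^sup>2) = 0" by linarith+
    then have "v k = 0" "\<forall>i\<in>{1..n-1}. u k i = 0" using g by (auto simp: sum_nonneg_eq_0_iff)
    then have "dd = 0" unfolding dd_def by simp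
    then show False using dd PS True by simp
  qed
  obtain t a where upd: "tau_lo \<le> t" "t \<le> tau_up" "a = t * phi k / pik k"
    "z (Suc k) = z k - (a / gamma) *\<^sub>R v k" "\<forall>i\<in>{1..n-1}. w (Suc k) i = w k i - a *\<^sub>R u k i"
    using update True by blast
  have apos: "0 \<le> a" using upd(1,3) params True pipos by simp
  have z1: "(norm (z (Suc k) - zs))\<^sup>2 = (norm (z k - zs))\<^sup>2 - 2 * (a/gamma) * inner (z k - zs) (v k) + (a/gamma)\<^sup>2 * (norm (v k))\<^sup>2"
  proof -
    have "z (Suc k) - zs = (z k - zs) - (a/gamma) *\<^sub>R v k" using upd(4) by simp
    then show ?thesis using norm_step[of "z k - zs" "a/gamma" "v k"] by (simp only:)
  qed
  have w1: "(\<Sum>i=1..n-1. (norm (w (Suc k) i - ws i))\<^sup>2) = (\<Sum>i=1..n-1. (norm (w k i - ws i))\<^sup>2)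
      - 2 * a * (\<Sum>i=1..n-1. inner (w k i - ws i) (u k i)) + a\<^sup>2 * (\<Sum>i=1..n-1. (norm (u k i))\<^sup>2)"
  proof -
    have "(\<Sum>i=1..n-1. (norm (w (Suc k) i - ws i))\<^sup>2) = (\<Sum>i=1..n-1. (norm (w k i - ws i))\<^sup>2
       - 2 * a * inner (w k i - ws i) (u k i) + a\<^sup>2 * (norm (u k i))\<^sup>2)"
    proof (rule sum.cong)
      fix i assume "i \<in> {1..n-1}"
      then have "w (Suc k) i - ws i = (w k i - ws i) - a *\<^sub>R u k i" using upd(5) by simp
      then show "(norm (w (Suc k) i - ws i))\<^sup>2 = (norm (w k i - ws i))\<^sup>2 - 2 * a * inner (w k i - ws i) (u k i) + a\<^sup>2 * (norm (u k i))\<^sup>2"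
        using norm_step[of "w k i - ws i" a "u k i"] by (simp only:)
    qed simp
    then show ?thesis by (simp add: sum.distrib sum_subtractf sum_distrib_left)
  qed
  have N1: "NN zs ws (Suc k) = NN zs ws k - 2 * a * dd + a\<^sup>2 * pik k"
    unfolding NN_def z1 w1 dd_def pi_def[rule_format] using g
    by (simp add: field_simps power2_eq_square)
  have "2 * a * dd \<ge> 2 * a * phi k" using dd PS apos by (simp add: mult_left_mono)
  then have N3: "NN zs ws (Suc k) \<le> NN zs ws k - 2 * a * phi k + a\<^sup>2 * pik k" using N1 by linarith
  have eqa: "2 * a * phi k - a\<^sup>2 * pik k = t * (2 - t) * (phi k)\<^sup>2 / pik k"
    unfolding upd(3) using pipos by (simp add: field_simps power2_eq_square)
  have N2: "NN zs ws (Suc k) \<le> NN zs ws k - t * (2 - t) * (phi k)\<^sup>2 / pik k" using N3 eqa by linarith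
  have "tau_lo * (2 - tau_up) \<le> t * (2 - t)"
    using upd(1,2) params by (intro mult_mono) auto
  then have "tau_lo * (2 - tau_up) * (phi k)\<^sup>2 / pik k \<le> t * (2 - t) * (phi k)\<^sup>2 / pik k"
    using pipos by (intro divide_right_mono mult_right_mono) auto
  then show ?thesis using N2 True pipos by simp
qed

definition binv where "binv i = real_of_ereal (inverse (beta i))"

lemma binv: "i \<in> {1..n} \<Longrightarrow> 0 \<le> binv i \<and> real_of_ereal (1 / (4 * beta i)) = binv i / 4"
  using ereal_beta A4 unfolding binv_def by blast

lemma A8': "\<exists>rl ru. \<forall>i\<in>{1..n}-ID. 0 < rl i \<and> rl i \<le> ru i \<and> ru i * (binv i / 4 + ell i) < 1 \<and>
   (\<forall>k. w k i \<notin> op_sum (A i) (B i) (C i) (D i) (G i (z k)) \<longrightarrow> rl i \<le> rho k i \<and> rho k i \<le> ru i)"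
proof -
  have "\<forall>i\<in>{1..n}-ID. \<exists>rl ru. 0 < rl \<and> rl \<le> ru \<and> ru * (binv i / 4 + ell i) < 1 \<and>
   (\<forall>k. w k i \<notin> op_sum (A i) (B i) (C i) (D i) (G i (z k)) \<longrightarrow> rl \<le> rho k i \<and> rho k i \<le> ru)"
  proof
    fix i assume i: "i \<in> {1..n}-ID"
    then obtain rl ru where r: "0 < rl" "rl \<le> ru" "ereal ru < 1 / (1 / (4 * beta i) + ereal (ell i))"
      "\<forall>k. w k i \<notin> op_sum (A i) (B i) (C i) (D i) (G i (z k)) \<longrightarrow> rl \<le> rho k i \<and> rho k i \<le> ru"
      using A8 by blast
    have "ru * (binv i / 4 + ell i) < 1"
      using ereal_A8[OF _ _ r(3)] A4 A3 i unfolding binv_def by auto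
    then show "\<exists>rl ru. 0 < rl \<and> rl \<le> ru \<and> ru * (binv i / 4 + ell i) < 1 \<and>
      (\<forall>k. w k i \<notin> op_sum (A i) (B i) (C i) (D i) (G i (z k)) \<longrightarrow> rl \<le> rho k i \<and> rho k i \<le> ru)"
      using r by blast
  qed
  then show ?thesis by metis
qed

definition dst where "dst k i = norm (G i (z k) - x k i)"

lemma case_split_ki:
  assumes i: "i \<in> {1..n}"
  obtains (C1) "x k i = G i (z k)" "rho k i = rho_hat"
  | (C2) "i \<in> ID" "theta_lo \<le> 4 * (ell i)\<^sup>2 * (rho k i)\<^sup>2 + (binv i + delta_hat) * rho k i + (m i * rho k i * dst k i)\<^sup>2"
         "4 * (ell i)\<^sup>2 * (rho k i)\<^sup>2 + (binv i + delta_hat) * rho k i + (m i * rho k i * dst k i)\<^sup>2 \<le> theta_up"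
  | (C3) "i \<in> {1..n} - ID" "w k i \<notin> op_sum (A i) (B i) (C i) (D i) (G i (z k))"
proof (cases "w k i \<in> op_sum (A i) (B i) (C i) (D i) (G i (z k))")
  case True then show ?thesis using case_i i C1 by blast
next
  case False
  show ?thesis
  proof (cases "i \<in> ID")
    case True
    then show ?thesis using case_ii False C2 unfolding binv_def dst_def by (simp add: norm_minus_commute)
  next
    case False2: False
    then show ?thesis using C3 False i by blast
  qed
qed

lemma rho_max: "\<exists>Rm>0. \<forall>k. \<forall>i\<in>{1..n}. rho k i \<le> Rm"
proof -
  obtain rl ru where r: "\<forall>i\<in>{1..n}-ID. 0 < rl i \<and> rl i \<le> ru i \<and> ru i * (binv i / 4 + ell i) < 1 \<and>
   (\<forall>k. w k i \<notin> op_sum (A i) (B i) (C i) (D i) (G i (z k)) \<longrightarrow> rl i \<le> rho k i \<and> rho k i \<le> ru i)"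
    using A8' by blast
  define Rm where "Rm = rho_hat + theta_up / delta_hat + (\<Sum>i\<in>{1..n}-ID. ru i)"
  have ru0: "\<forall>i\<in>{1..n}-ID. 0 \<le> ru i" using r by (meson less_imp_le order_trans)
  have sum0: "0 \<le> (\<Sum>i\<in>{1..n}-ID. ru i)" using ru0 by (intro sum_nonneg) blast
  have Rm: "Rm > 0" unfolding Rm_def using params sum0 by (smt (verit) divide_pos_pos)
  have "rho k i \<le> Rm" if i: "i \<in> {1..n}" for k i
  proof (cases rule: case_split_ki[OF i, of k, case_names C1 C2 C3])
    case C1 then show ?thesis unfolding Rm_def using params sum0 by (smt (verit) divide_pos_pos)
  next
    case C2
    have rp: "0 < rho k i" using rho_pos[OF i] .
    have "0 \<le> 4 * (ell i)\<^sup>2 * (rho k i)\<^sup>2" by simp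
    moreover have "0 \<le> (m i * rho k i * dst k i)\<^sup>2" by simp
    moreover have "0 \<le> binv i * rho k i" using binv[OF i] rp by simp
    moreover have "(binv i + delta_hat) * rho k i = binv i * rho k i + delta_hat * rho k i" by (simp add: algebra_simps)
    ultimately have "delta_hat * rho k i \<le> theta_up" using C2(3) by linarith
    then have "rho k i \<le> theta_up / delta_hat" using params by (simp add: field_simps)
    then show ?thesis unfolding Rm_def using params sum0 by linarith
  next
    case C3
    then have "rho k i \<le> ru i" using r by blast
    also have "ru i \<le> (\<Sum>i\<in>{1..n}-ID. ru i)"
      using C3(1) ru0 by (intro member_le_sum) auto
    finally show ?thesis unfolding Rm_def using params by (smt (verit) divide_pos_pos)
  qed
  then show ?thesis using Rm by blast
qed

lemma c_general:
  assumes i: "i \<in> {1..n}"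
  shows "(dst k i)\<^sup>2 / rho k i * (1 - ell i * rho k i - m i * rho k i * dst k i / 2 - binv i * rho k i / 4)
     \<le> inner (G i (z k) - x k i) (y k i - w k i) - cr k i"
proof -
  define p e d \<rho> where "p = G i (z k)" and "e = G i (z k) - x k i" and "d = dst k i" and "\<rho> = rho k i"
  have rp: "0 < \<rho>" using rho_pos[OF i] \<rho>_def by simp
  have de: "d = norm e" unfolding d_def e_def dst_def ..
  obtain r where r: "y k i - w k i = (1/\<rho>) *\<^sub>R e + (B i (x k i) - B i p) + r" "norm r \<le> m i / 2 * d\<^sup>2"
    using sf[OF i] unfolding p_def e_def d_def \<rho>_def dst_def by blast
  have pH: "p \<in> H i" using G_mem[OF i zH] p_def by simp
  have lipB: "norm (B i (x k i) - B i p) \<le> ell i * norm (x k i - p)" using A3 i xH[OF i] pH by blast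
  have xp: "norm (x k i - p) = d" unfolding de e_def p_def by (simp add: norm_minus_commute)
  have i1: "- (d * (ell i * d)) \<le> inner e (B i (x k i) - B i p)"
  proof -
    have "\<bar>inner e (B i (x k i) - B i p)\<bar> \<le> d * norm (B i (x k i) - B i p)"
      using Cauchy_Schwarz_ineq2 de by simp
    also have "\<dots> \<le> d * (ell i * d)" using lipB xp de by (simp add: mult_left_mono)
    finally show ?thesis by (simp add: abs_le_iff)
  qed
  have i2: "- (d * (m i / 2 * d\<^sup>2)) \<le> inner e r"
  proof -
    have "\<bar>inner e r\<bar> \<le> d * norm r" using Cauchy_Schwarz_ineq2 de by simp
    also have "\<dots> \<le> d * (m i / 2 * d\<^sup>2)" using r(2) de by (intro mult_left_mono) auto
    finally show ?thesis by (simp add: abs_le_iff)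
  qed
  have i0: "inner e ((1/\<rho>) *\<^sub>R e) = d\<^sup>2 / \<rho>" using de by (simp add: power2_norm_eq_inner)
  have crr: "cr k i = binv i / 4 * d\<^sup>2"
    unfolding cr_def using binv[OF i] xp p_def by simp
  have "inner (G i (z k) - x k i) (y k i - w k i) - cr k i
      = d\<^sup>2 / \<rho> + inner e (B i (x k i) - B i p) + inner e r - binv i / 4 * d\<^sup>2"
    unfolding r(1) e_def[symmetric] crr using i0 by (simp add: inner_add_right)
  moreover have "d\<^sup>2 / \<rho> * (1 - ell i * \<rho> - m i * \<rho> * d / 2 - binv i * \<rho> / 4)
     = d\<^sup>2 / \<rho> - d * (ell i * d) - d * (m i / 2 * d\<^sup>2) - binv i / 4 * d\<^sup>2"
    using rp by (simp add: field_simps power2_eq_square)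
  ultimately show ?thesis using i1 i2 unfolding d_def \<rho>_def by linarith
qed

lemma c_lower: "\<exists>\<kappa>>0. \<forall>i\<in>{1..n}. \<forall>k. \<kappa> * (dst k i)\<^sup>2 / rho k i \<le> inner (G i (z k) - x k i) (y k i - w k i) - cr k i"
proof (rule finite_lower, simp, rule ballI)
  fix i assume i: "i \<in> {1..n}"
  obtain rl ru where r: "\<forall>i\<in>{1..n}-ID. 0 < rl i \<and> rl i \<le> ru i \<and> ru i * (binv i / 4 + ell i) < 1 \<and>
   (\<forall>k. w k i \<notin> op_sum (A i) (B i) (C i) (D i) (G i (z k)) \<longrightarrow> rl i \<le> rho k i \<and> rho k i \<le> ru i)"
    using A8' by blast
  define \<kappa> where "\<kappa> = (if i \<in> ID then 1 - sqrt (theta_up / 2) else 1 - ru i * (binv i / 4 + ell i))"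
  have kp: "\<kappa> > 0"
  proof (cases "i \<in> ID")
    case True
    have "sqrt (theta_up / 2) < 1" using params by simp
    then show ?thesis using True \<kappa>_def by simp
  next
    case False then show ?thesis using r i \<kappa>_def by simp
  qed
  have main: "\<kappa> * (dst k i)\<^sup>2 / rho k i \<le> inner (G i (z k) - x k i) (y k i - w k i) - cr k i" for k
  proof -
    have rp: "0 < rho k i" using rho_pos[OF i] .
    have ell0: "0 \<le> ell i" using A3 i by blast
    have m0: "0 \<le> m i" using A5 i by blast
    have b0: "0 \<le> binv i" using binv[OF i] by simp
    have d0: "0 \<le> dst k i" unfolding dst_def by simp
    have br: "\<kappa> \<le> 1 - ell i * rho k i - m i * rho k i * dst k i / 2 - binv i * rho k i / 4 \<or> dst k i = 0"
    proof (cases rule: case_split_ki[OF i, of k, case_names C1 C2 C3])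
      case C1 then show ?thesis unfolding dst_def by simp
    next
      case C2
      have "4 * (ell i * rho k i)\<^sup>2 + (m i * rho k i * dst k i)\<^sup>2 + binv i * rho k i \<le> theta_up"
      proof -
        have "0 \<le> delta_hat * rho k i" using params rp by simp
        moreover have "(binv i + delta_hat) * rho k i = binv i * rho k i + delta_hat * rho k i" by (simp add: algebra_simps)
        moreover have "4 * (ell i * rho k i)\<^sup>2 = 4 * (ell i)\<^sup>2 * (rho k i)\<^sup>2" by (simp add: power_mult_distrib)
        ultimately show ?thesis using C2(3) by linarith
      qed
      then have "1 - sqrt (theta_up / 2) \<le> 1 - ell i * rho k i - m i * rho k i * dst k i / 2 - binv i * rho k i / 4"
        using bracket_bound[of "ell i * rho k i" "m i * rho k i * dst k i" "binv i * rho k i" theta_up]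
          ell0 m0 b0 d0 rp params by auto
      then show ?thesis using C2 \<kappa>_def by simp
    next
      case C3
      have mz: "m i = 0" using A7 C3 by blast
      have "rho k i \<le> ru i" using r C3 by blast
      then have "rho k i * (binv i / 4 + ell i) \<le> ru i * (binv i / 4 + ell i)"
        using b0 ell0 by (intro mult_right_mono) auto
      then show ?thesis using C3 \<kappa>_def mz by (simp add: algebra_simps)
    qed
    show ?thesis
    proof (cases "dst k i = 0")
      case True
      then show ?thesis using c_general[OF i, of k] by simp
    next
      case False
      then have "\<kappa> \<le> 1 - ell i * rho k i - m i * rho k i * dst k i / 2 - binv i * rho k i / 4" using br by simp
      moreover have "0 \<le> (dst k i)\<^sup>2 / rho k i" using rp by simp
      ultimately have "(dst k i)\<^sup>2 / rho k i * \<kappa> \<le> (dst k i)\<^sup>2 / rho k i * (1 - ell i * rho k i - m i * rho k i * dst k i / 2 - binv i * rho k i / 4)"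
        by (intro mult_left_mono) auto
      then show ?thesis using c_general[OF i, of k] by (simp add: mult.commute)
    qed
  qed
  show "\<exists>e>0. \<forall>e'. 0 < e' \<and> e' \<le> e \<longrightarrow> (\<forall>k. e' * (dst k i)\<^sup>2 / rho k i \<le> inner (G i (z k) - x k i) (y k i - w k i) - cr k i)"
  proof (rule exI[of _ \<kappa>], intro conjI allI impI)
    show "0 < \<kappa>" by (rule kp)
    fix e' k assume e': "0 < e' \<and> e' \<le> \<kappa>"
    have "e' * (dst k i)\<^sup>2 / rho k i \<le> \<kappa> * (dst k i)\<^sup>2 / rho k i"
      using e' rho_pos[OF i, of k] by (intro divide_right_mono mult_right_mono) auto
    then show "e' * (dst k i)\<^sup>2 / rho k i \<le> inner (G i (z k) - x k i) (y k i - w k i) - cr k i"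
      using main[of k] by linarith
  qed
qed

lemma rho_lower:
  assumes K: "0 \<le> K"
  shows "\<exists>r>0. \<forall>i\<in>{1..n}. \<forall>k. dst k i \<le> K \<longrightarrow> r \<le> rho k i"
proof (rule finite_lower, simp, rule ballI)
  fix i assume i: "i \<in> {1..n}"
  obtain rl ru where r: "\<forall>i\<in>{1..n}-ID. 0 < rl i \<and> rl i \<le> ru i \<and> ru i * (binv i / 4 + ell i) < 1 \<and>
   (\<forall>k. w k i \<notin> op_sum (A i) (B i) (C i) (D i) (G i (z k)) \<longrightarrow> rl i \<le> rho k i \<and> rho k i \<le> ru i)"
    using A8' by blast
  obtain Rm where Rm: "Rm > 0" "\<forall>k. \<forall>i\<in>{1..n}. rho k i \<le> Rm" using rho_max by blast
  have ell0: "0 \<le> ell i" using A3 i by blast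
  have m0: "0 \<le> m i" using A5 i by blast
  have b0: "0 \<le> binv i" using binv[OF i] by simp
  define Q where "Q = 4 * (ell i)\<^sup>2 * Rm + binv i + delta_hat + (m i)\<^sup>2 * K\<^sup>2 * Rm"
  have Qp: "Q > 0" unfolding Q_def using params Rm b0 by (simp add: add_nonneg_pos add_pos_nonneg)
  define r0 where "r0 = min rho_hat (if i \<in> ID then theta_lo / Q else rl i)"
  have r0p: "r0 > 0" unfolding r0_def using params Qp r i by auto
  have main: "r0 \<le> rho k i" if dk: "dst k i \<le> K" for k
  proof (cases rule: case_split_ki[OF i, of k, case_names C1 C2 C3])
    case C1 then show ?thesis unfolding r0_def by simp
  next
    case C2
    have rp: "0 < rho k i" using rho_pos[OF i] .
    have d0: "0 \<le> dst k i" unfolding dst_def by simp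
    have a1: "4 * (ell i)\<^sup>2 * (rho k i)\<^sup>2 \<le> (4 * (ell i)\<^sup>2 * Rm) * rho k i"
    proof -
      have "(4 * (ell i)\<^sup>2 * rho k i) * rho k i \<le> (4 * (ell i)\<^sup>2 * Rm) * rho k i"
        using Rm i rp by (intro mult_right_mono mult_left_mono) auto
      then show ?thesis by (simp add: power2_eq_square mult.assoc)
    qed
    have "(dst k i)\<^sup>2 * rho k i \<le> K\<^sup>2 * Rm"
      using dk d0 Rm i rp by (intro mult_mono power_mono) auto
    then have a2: "(m i * rho k i * dst k i)\<^sup>2 \<le> ((m i)\<^sup>2 * K\<^sup>2 * Rm) * rho k i"
    proof -
      assume h: "(dst k i)\<^sup>2 * rho k i \<le> K\<^sup>2 * Rm"
      have "(m i * rho k i * dst k i)\<^sup>2 = ((m i)\<^sup>2 * ((dst k i)\<^sup>2 * rho k i)) * rho k i"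
        by (simp add: power2_eq_square)
      also have "\<dots> \<le> ((m i)\<^sup>2 * (K\<^sup>2 * Rm)) * rho k i"
        using h rp by (intro mult_right_mono mult_left_mono) auto
      finally show ?thesis by simp
    qed
    have "theta_lo \<le> Q * rho k i"
      using C2(2) a1 a2 unfolding Q_def by (simp add: algebra_simps)
    then have "theta_lo / Q \<le> rho k i" using Qp by (simp add: field_simps)
    then show ?thesis unfolding r0_def using C2 by simp
  next
    case C3
    then have "rl i \<le> rho k i" using r by blast
    then show ?thesis using C3 unfolding r0_def by (simp add: min_le_iff_disj)
  qed
  show "\<exists>e>0. \<forall>e'. 0 < e' \<and> e' \<le> e \<longrightarrow> (\<forall>k. dst k i \<le> K \<longrightarrow> e' \<le> rho k i)"
  proof (rule exI[of _ r0], intro conjI allI impI)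
    show "0 < r0" by (rule r0p)
    fix e' k assume "0 < e' \<and> e' \<le> r0" "dst k i \<le> K"
    then show "e' \<le> rho k i" using main[of k] by linarith
  qed
qed

lemma yw_bound: "\<exists>Ky>0. \<forall>i\<in>{1..n}. \<forall>k. norm (y k i - w k i) \<le> Ky * (dst k i / rho k i)"
proof -
  obtain Rm where Rm: "Rm > 0" "\<forall>k. \<forall>i\<in>{1..n}. rho k i \<le> Rm" using rho_max by blast
  have "\<exists>K. \<forall>i\<in>{1..n}. (\<lambda>i K. \<forall>k. norm (y k i - w k i) \<le> K * (dst k i / rho k i)) i K"
  proof (rule finite_upper, simp, rule ballI)
    fix i assume i: "i \<in> {1..n}"
    have ell0: "0 \<le> ell i" using A3 i by blast
    have m0: "0 \<le> m i" using A5 i by blast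
    define K0 where "K0 = 2 + ell i * Rm"
    have main: "norm (y k i - w k i) \<le> K0 * (dst k i / rho k i)" for k
    proof -
      have rp: "0 < rho k i" using rho_pos[OF i] .
      have d0: "0 \<le> dst k i" unfolding dst_def by simp
      define e where "e = G i (z k) - x k i"
      have de: "dst k i = norm e" unfolding e_def dst_def ..
      obtain r where r: "y k i - w k i = (1/rho k i) *\<^sub>R e + (B i (x k i) - B i (G i (z k))) + r"
          "norm r \<le> m i / 2 * (dst k i)\<^sup>2"
        using sf[OF i] unfolding e_def dst_def by blast
      have lipB: "norm (B i (x k i) - B i (G i (z k))) \<le> ell i * dst k i"
      proof -
        have "norm (B i (x k i) - B i (G i (z k))) \<le> ell i * norm (x k i - G i (z k))"
          using A3 i xH[OF i] G_mem[OF i zH] by blast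
        then show ?thesis unfolding dst_def by (simp add: norm_minus_commute)
      qed
      have "norm (y k i - w k i) \<le> dst k i / rho k i + ell i * dst k i + norm r"
      proof -
        have "norm ((1/rho k i) *\<^sub>R e) = dst k i / rho k i" using de rp by simp
        moreover have "norm ((1/rho k i) *\<^sub>R e + (B i (x k i) - B i (G i (z k))) + r)
            \<le> norm ((1/rho k i) *\<^sub>R e) + norm (B i (x k i) - B i (G i (z k))) + norm r"
          using norm_triangle_ineq[of "(1/rho k i) *\<^sub>R e + (B i (x k i) - B i (G i (z k)))" r]
            norm_triangle_ineq[of "(1/rho k i) *\<^sub>R e" "B i (x k i) - B i (G i (z k))"] by linarith
        ultimately show ?thesis unfolding r(1) using lipB by linarith
      qed
      also have "ell i * dst k i \<le> ell i * Rm * (dst k i / rho k i)"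
      proof -
        have "ell i * dst k i = ell i * rho k i * (dst k i / rho k i)" using rp by simp
        also have "\<dots> \<le> ell i * Rm * (dst k i / rho k i)"
          using Rm i rp ell0 d0 by (intro mult_right_mono mult_left_mono) auto
        finally show ?thesis .
      qed
      also have "norm r \<le> dst k i / rho k i"
      proof (cases rule: case_split_ki[OF i, of k, case_names C1 C2 C3])
        case C1
        then have "dst k i = 0" unfolding dst_def by simp
        then show ?thesis using r(2) by simp
      next
        case C2
        have "(m i * rho k i * dst k i)\<^sup>2 \<le> theta_up"
        proof -
          have "0 \<le> 4 * (ell i)\<^sup>2 * (rho k i)\<^sup>2" by simp
          moreover have "0 \<le> (binv i + delta_hat) * rho k i" using binv[OF i] params rp by simp
          ultimately show ?thesis using C2(3) by linarith
        qed
        then have "(m i * rho k i * dst k i)\<^sup>2 \<le> 2\<^sup>2" using params by simp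
        then have mr: "m i * rho k i * dst k i \<le> 2"
          by (rule power2_le_imp_le) simp
        have "m i / 2 * (dst k i)\<^sup>2 = (m i * rho k i * dst k i) / 2 * (dst k i / rho k i)"
          using rp by (simp add: power2_eq_square)
        also have "\<dots> \<le> 1 * (dst k i / rho k i)"
          using mr d0 rp by (intro mult_right_mono) auto
        finally show ?thesis using r(2) by linarith
      next
        case C3
        have "m i = 0" using A7 C3 by blast
        then show ?thesis using r(2) d0 rp by simp
      qed
      finally show ?thesis unfolding K0_def by (simp add: algebra_simps add_divide_distrib)
    qed
    show "\<exists>K. \<forall>K'\<ge>K. \<forall>k. norm (y k i - w k i) \<le> K' * (dst k i / rho k i)"
    proof (rule exI[of _ K0], intro allI impI)
      fix K' k assume "K0 \<le> K'"
      moreover have "0 \<le> dst k i / rho k i" using rho_pos[OF i, of k] unfolding dst_def by simp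
      ultimately have "K0 * (dst k i / rho k i) \<le> K' * (dst k i / rho k i)" by (rule mult_right_mono)
      then show "norm (y k i - w k i) \<le> K' * (dst k i / rho k i)" using main[of k] by linarith
    qed
  qed
  then obtain K where K: "\<forall>i\<in>{1..n}. \<forall>k. norm (y k i - w k i) \<le> K * (dst k i / rho k i)" by blast
  have "\<forall>i\<in>{1..n}. \<forall>k. norm (y k i - w k i) \<le> (\<bar>K\<bar> + 1) * (dst k i / rho k i)"
  proof (intro ballI allI)
    fix i k assume i: "i \<in> {1..n}"
    have "0 \<le> dst k i / rho k i" using rho_pos[OF i, of k] unfolding dst_def by simp
    then have "K * (dst k i / rho k i) \<le> (\<bar>K\<bar> + 1) * (dst k i / rho k i)" by (intro mult_right_mono) auto
    then show "norm (y k i - w k i) \<le> (\<bar>K\<bar> + 1) * (dst k i / rho k i)" using K i by (meson order_trans)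
  qed
  then show ?thesis by (intro exI[of _ "\<bar>K\<bar> + 1"]) auto
qed

lemma NN_nonneg: "0 \<le> NN zs ws k"
  unfolding NN_def using params by (auto intro!: add_nonneg_nonneg sum_nonneg)

lemma fejer_term_nonneg: "0 \<le> (if 0 < phi k then tau_lo * (2 - tau_up) * (phi k)\<^sup>2 / pik k else 0)"
  using params pik_nonneg[of k] by auto

lemma NN_dec: assumes "is_sol zs ws" shows "NN zs ws k \<le> NN zs ws 0"
proof (induction k)
  case (Suc k)
  then show ?case using fejer[OF assms, of k] fejer_term_nonneg[of k] by linarith
qed simp

lemma z_close: assumes "is_sol zs ws" shows "norm (z k - zs) \<le> sqrt (NN zs ws 0 / gamma)"
proof -
  have "gamma * (norm (z k - zs))\<^sup>2 \<le> NN zs ws 0"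
    using NN_dec[OF assms, of k] unfolding NN_def by (smt (verit) sum_nonneg zero_le_power2)
  then have "(norm (z k - zs))\<^sup>2 \<le> NN zs ws 0 / gamma" using params by (simp add: field_simps mult.commute)
  then show ?thesis by (simp add: real_le_rsqrt)
qed

lemma w_close: assumes "is_sol zs ws" "i \<in> {1..n-1}" shows "norm (w k i - ws i) \<le> sqrt (NN zs ws 0)"
proof -
  have "(norm (w k i - ws i))\<^sup>2 \<le> (\<Sum>i=1..n-1. (norm (w k i - ws i))\<^sup>2)"
    using assms(2) by (intro member_le_sum) auto
  also have "\<dots> \<le> NN zs ws 0"
    using NN_dec[OF assms(1), of k] params unfolding NN_def by (smt (verit) mult_nonneg_nonneg zero_le_power2)
  finally show ?thesis by (simp add: real_le_rsqrt)
qed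

lemma phi_nonneg: "0 \<le> phi k"
proof -
  obtain \<kappa> where k: "\<kappa> > 0" "\<forall>i\<in>{1..n}. \<forall>k. \<kappa> * (dst k i)\<^sup>2 / rho k i \<le> inner (G i (z k) - x k i) (y k i - w k i) - cr k i"
    using c_lower by blast
  have "0 \<le> inner (G i (z k) - x k i) (y k i - w k i) - cr k i" if i: "i \<in> {1..n}" for i
  proof -
    have "0 \<le> \<kappa> * (dst k i)\<^sup>2 / rho k i" using k(1) rho_pos[OF i, of k] by simp
    then show ?thesis using k(2) i by (meson order_trans)
  qed
  then show ?thesis unfolding phi_eq by (intro sum_nonneg) auto
qed

lemma vu_bound: "\<exists>K1>0. \<forall>k M. (\<forall>i\<in>{1..n}. dst k i / rho k i \<le> M) \<longrightarrow>
   norm (v k) \<le> K1 * M \<and> (\<forall>i\<in>{1..n-1}. norm (u k i) \<le> K1 * M)"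
proof -
  obtain Kg where Kg: "Kg > 0" "\<forall>i\<in>{1..n}. \<forall>q\<in>H i. norm (Gadj i q) \<le> Kg * norm q" using Gadj_bound by blast
  obtain KG where KG: "KG > 0" "\<forall>i\<in>{1..n}. \<forall>p. norm (G i p) \<le> KG * norm p" using G_bound by blast
  obtain Ky where Ky: "Ky > 0" "\<forall>i\<in>{1..n}. \<forall>k. norm (y k i - w k i) \<le> Ky * (dst k i / rho k i)" using yw_bound by blast
  obtain Rm where Rm: "Rm > 0" "\<forall>k. \<forall>i\<in>{1..n}. rho k i \<le> Rm" using rho_max by blast
  define K1 where "K1 = real n * Kg * Ky + (1 + KG) * Rm"
  have K1: "K1 > 0" unfolding K1_def using Kg Ky KG Rm n2 by (simp add: add_pos_pos)
  have "norm (v k) \<le> K1 * M \<and> (\<forall>i\<in>{1..n-1}. norm (u k i) \<le> K1 * M)"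
    if M: "\<forall>i\<in>{1..n}. dst k i / rho k i \<le> M" for k M
  proof -
    have nI: "n \<in> {1..n}" using n2 by auto
    have M0: "0 \<le> M" using M nI rho_pos[OF nI, of k] unfolding dst_def
      by (meson divide_nonneg_pos norm_ge_zero order_trans)
    have dM: "dst k i \<le> Rm * M" if i: "i \<in> {1..n}" for i
    proof -
      have rp: "0 < rho k i" using rho_pos[OF i] .
      have "dst k i = rho k i * (dst k i / rho k i)" using rp by simp
      also have "\<dots> \<le> Rm * M" using M i Rm rp M0 unfolding dst_def by (intro mult_mono) auto
      finally show ?thesis .
    qed
    have vsum: "v k = (\<Sum>i=1..n. Gadj i (y k i - w k i))"
      using v_def w_sum0[of k] Gadj_diff[OF _ yH wH] by (simp add: sum_subtractf)
    have "norm (v k) \<le> (\<Sum>i=1..n. norm (Gadj i (y k i - w k i)))" unfolding vsum by (rule norm_sum)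
    also have "\<dots> \<le> (\<Sum>i=1..n. Kg * (Ky * M))"
    proof (rule sum_mono)
      fix i assume i: "i \<in> {1..n}"
      have yw: "y k i - w k i \<in> H i" using yH[OF i] wH[OF i] subI[OF i] by (simp add: subspace_diff)
      have "norm (Gadj i (y k i - w k i)) \<le> Kg * norm (y k i - w k i)" using Kg yw i by blast
      also have "\<dots> \<le> Kg * (Ky * M)"
      proof -
        have "norm (y k i - w k i) \<le> Ky * (dst k i / rho k i)" using Ky i by blast
        also have "\<dots> \<le> Ky * M" using M i Ky by (intro mult_left_mono) auto
        finally show ?thesis using Kg by (intro mult_left_mono) auto
      qed
      finally show "norm (Gadj i (y k i - w k i)) \<le> Kg * (Ky * M)" .
    qed
    also have "\<dots> = real n * Kg * Ky * M" by simp
    also have "\<dots> \<le> K1 * M" unfolding K1_def using M0 KG Rm by (intro mult_right_mono) auto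
    finally have vb: "norm (v k) \<le> K1 * M" .
    have ub: "norm (u k i) \<le> K1 * M" if i: "i \<in> {1..n-1}" for i
    proof -
      have i': "i \<in> {1..n}" using i by auto
      have zk: "z k \<in> H 0" by (rule zH)
      have lin: "bounded_linear (G i)" using A1 i' by blast
      have gx: "G i (x k n) = G i (z k) - G i (z k - x k n)"
        using linear_diff[OF bounded_linear.linear[OF lin], of "z k" "z k - x k n"] by simp
      have ue: "u k i = - (G i (z k) - x k i) + G i (z k - x k n)"
      proof -
        have "u k i = x k i - G i (x k n)" using u_def i by blast
        then show ?thesis unfolding gx by (simp add: algebra_simps)
      qed
      have dn: "dst k n = norm (z k - x k n)" unfolding dst_def Gn[OF zk] ..
      have "norm (u k i) \<le> dst k i + KG * dst k n"
        unfolding ue dn using KG i' norm_triangle_ineq[of "- (G i (z k) - x k i)" "G i (z k - x k n)"]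
        unfolding dst_def by (smt (verit) norm_minus_cancel)
      also have "\<dots> \<le> Rm * M + KG * (Rm * M)"
        using dM[OF i'] dM[OF nI] KG by (intro add_mono mult_left_mono) auto
      also have "\<dots> = (1 + KG) * Rm * M" by (simp add: algebra_simps)
      also have "\<dots> \<le> K1 * M" unfolding K1_def using M0 Kg Ky n2 by (intro mult_right_mono) auto
      finally show ?thesis .
    qed
    show ?thesis using vb ub by blast
  qed
  then show ?thesis using K1 by blast
qed

lemma ratio_bound: "\<exists>Mb. \<forall>k. \<forall>i\<in>{1..n}. dst k i / rho k i \<le> Mb"
proof -
  obtain zs ws where sol: "is_sol zs ws" using sol_exists by blast
  obtain \<kappa> where kap: "\<kappa> > 0" "\<forall>i\<in>{1..n}. \<forall>k. \<kappa> * (dst k i)\<^sup>2 / rho k i \<le> inner (G i (z k) - x k i) (y k i - w k i) - cr k i"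
    using c_lower by blast
  obtain K1 where K1: "K1 > 0" "\<forall>k M. (\<forall>i\<in>{1..n}. dst k i / rho k i \<le> M) \<longrightarrow>
   norm (v k) \<le> K1 * M \<and> (\<forall>i\<in>{1..n-1}. norm (u k i) \<le> K1 * M)" using vu_bound by blast
  define R0 where "R0 = sqrt (NN zs ws 0 / gamma) + sqrt (NN zs ws 0)"
  have R0: "0 \<le> R0" unfolding R0_def using NN_nonneg[of zs ws 0] params by simp
  define L where "L = R0 * K1 * real n"
  have L0: "0 \<le> L" unfolding L_def using R0 K1 by simp
  define Kd where "Kd = L / \<kappa>"
  have Kd0: "0 \<le> Kd" unfolding Kd_def using L0 kap by simp
  obtain r where r: "r > 0" "\<forall>i\<in>{1..n}. \<forall>k. dst k i \<le> Kd \<longrightarrow> r \<le> rho k i" using rho_lower[OF Kd0] by blast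
  have "dst k i / rho k i \<le> Kd / r" if i: "i \<in> {1..n}" for k i
  proof -
    define f where "f i = dst k i / rho k i" for i
    define M where "M = Max (f ` {1..n})"
    have fin: "finite (f ` {1..n})" "f ` {1..n} \<noteq> {}" using n2 by auto
    have Mge: "\<forall>i\<in>{1..n}. f i \<le> M" unfolding M_def using fin by auto
    obtain j where j: "j \<in> {1..n}" "f j = M" using Max_in[OF fin] unfolding M_def by auto
    have rpj: "0 < rho k j" using rho_pos[OF j(1)] .
    have M0: "0 \<le> M" using j rpj unfolding f_def dst_def by (metis divide_nonneg_pos norm_ge_zero)
    have vb: "norm (v k) \<le> K1 * M" and ub: "\<forall>i\<in>{1..n-1}. norm (u k i) \<le> K1 * M"
      using K1(2) Mge unfolding f_def by blast+
    have phiL: "phi k \<le> L * M"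
    proof -
      have "phi k \<le> phi k - PS zs ws k" using PS_nonpos[OF sol, of k] by simp
      also have "\<dots> = inner (z k - zs) (v k) + (\<Sum>i=1..n-1. inner (w k i - ws i) (u k i))"
        using phi_minus_PS[OF sol] .
      also have "\<dots> \<le> R0 * (K1 * M) + (\<Sum>i=1..n-1. R0 * (K1 * M))"
      proof (rule add_mono)
        have "inner (z k - zs) (v k) \<le> norm (z k - zs) * norm (v k)" by (rule norm_cauchy_schwarz)
        also have "\<dots> \<le> R0 * (K1 * M)"
        proof -
          have "norm (z k - zs) \<le> R0" using z_close[OF sol, of k] NN_nonneg[of zs ws 0]
            unfolding R0_def by (smt (verit) real_sqrt_ge_zero)
          then show ?thesis using vb R0 by (intro mult_mono) auto
        qed
        finally show "inner (z k - zs) (v k) \<le> R0 * (K1 * M)" .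
        show "(\<Sum>i=1..n-1. inner (w k i - ws i) (u k i)) \<le> (\<Sum>i=1..n-1. R0 * (K1 * M))"
        proof (rule sum_mono)
          fix i assume i: "i \<in> {1..n-1}"
          have "inner (w k i - ws i) (u k i) \<le> norm (w k i - ws i) * norm (u k i)" by (rule norm_cauchy_schwarz)
          also have "\<dots> \<le> R0 * (K1 * M)"
          proof -
            have "norm (w k i - ws i) \<le> R0" using w_close[OF sol i, of k] NN_nonneg[of zs ws 0] params
              unfolding R0_def by (smt (verit) real_sqrt_ge_zero divide_nonneg_pos)
            then show ?thesis using ub i R0 by (intro mult_mono) auto
          qed
          finally show "inner (w k i - ws i) (u k i) \<le> R0 * (K1 * M)" .
        qed
      qed
      also have "\<dots> = R0 * (K1 * M) * real n"
        using n2 by (simp add: algebra_simps of_nat_diff)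
      also have "\<dots> = L * M" unfolding L_def by simp
      finally show ?thesis .
    qed
    have phiG: "\<kappa> * (dst k j)\<^sup>2 / rho k j \<le> phi k"
    proof -
      have nn: "\<forall>i\<in>{1..n}. 0 \<le> inner (G i (z k) - x k i) (y k i - w k i) - cr k i"
      proof
        fix i assume i: "i \<in> {1..n}"
        have "0 \<le> \<kappa> * (dst k i)\<^sup>2 / rho k i" using kap(1) rho_pos[OF i, of k] by simp
        then show "0 \<le> inner (G i (z k) - x k i) (y k i - w k i) - cr k i" using kap(2) i by (meson order_trans)
      qed
      have "inner (G j (z k) - x k j) (y k j - w k j) - cr k j \<le> phi k"
        unfolding phi_eq using nn j(1) by (intro member_le_sum) auto
      then show ?thesis using kap(2) j(1) by (meson order_trans)
    qed
    have "f i \<le> M" using Mge i by blast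
    moreover have "M \<le> Kd / r"
    proof (cases "M = 0")
      case True then show ?thesis using Kd0 r by simp
    next
      case False
      then have Mp: "M > 0" using M0 by simp
      have dj: "dst k j = M * rho k j" using j(2) rpj unfolding f_def by (simp add: field_simps)
      have "\<kappa> * (dst k j)\<^sup>2 / rho k j = (\<kappa> * dst k j) * M"
        using dj rpj by (simp add: power2_eq_square field_simps)
      then have "(\<kappa> * dst k j) * M \<le> L * M" using phiG phiL by linarith
      then have "\<kappa> * dst k j \<le> L" using Mp by simp
      then have dK: "dst k j \<le> Kd" unfolding Kd_def using kap(1) by (simp add: field_simps)
      then have rr: "r \<le> rho k j" using r j(1) by blast
      have "M = dst k j / rho k j" using j(2) unfolding f_def by simp
      also have "\<dots> \<le> Kd / r" using dK rr r(1) Kd0 unfolding dst_def by (intro frac_le) auto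
      finally show ?thesis .
    qed
    ultimately show ?thesis unfolding f_def by simp
  qed
  then show ?thesis by blast
qed

lemma main_result:
  "(\<exists>xi>0. \<forall>k. pik k \<le> xi\<^sup>2) \<and>
   (\<forall>i\<in>{1..n}. (\<lambda>k. G i (z k) - x k i) \<longlonglongrightarrow> 0 \<and> (\<lambda>k. w k i - y k i) \<longlonglongrightarrow> 0) \<and>
   (\<lambda>k. \<Sum>i=1..n. Gadj i (y k i)) \<longlonglongrightarrow> 0 \<and>
   (\<forall>i\<in>{1..n-1}. (\<lambda>k. x k i - G i (x k n)) \<longlonglongrightarrow> 0)"
proof -
  obtain Mb where Mb: "\<forall>k. \<forall>i\<in>{1..n}. dst k i / rho k i \<le> Mb" using ratio_bound by blast
  obtain K1 where K1: "K1 > 0" "\<forall>k M. (\<forall>i\<in>{1..n}. dst k i / rho k i \<le> M) \<longrightarrow>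
   norm (v k) \<le> K1 * M \<and> (\<forall>i\<in>{1..n-1}. norm (u k i) \<le> K1 * M)" using vu_bound by blast
  obtain Rm where Rm: "Rm > 0" "\<forall>k. \<forall>i\<in>{1..n}. rho k i \<le> Rm" using rho_max by blast
  obtain Ky where Ky: "Ky > 0" "\<forall>i\<in>{1..n}. \<forall>k. norm (y k i - w k i) \<le> Ky * (dst k i / rho k i)" using yw_bound by blast
  obtain \<kappa> where kap: "\<kappa> > 0" "\<forall>i\<in>{1..n}. \<forall>k. \<kappa> * (dst k i)\<^sup>2 / rho k i \<le> inner (G i (z k) - x k i) (y k i - w k i) - cr k i"
    using c_lower by blast
  have nI: "n \<in> {1..n}" using n2 by auto
  have Mb0: "0 \<le> Mb" using Mb nI rho_pos[OF nI, of 0] unfolding dst_def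
    by (meson divide_nonneg_pos norm_ge_zero order_trans)
  define P where "P = (1/gamma) * (K1 * Mb)\<^sup>2 + real (n - 1) * (K1 * Mb)\<^sup>2"
  define xi where "xi = sqrt P + 1"
  have P0: "0 \<le> P" unfolding P_def using params by simp
  have xi: "xi > 0" "P \<le> xi\<^sup>2" unfolding xi_def using P0
    by (auto simp: power2_eq_square algebra_simps) (smt (verit) real_sqrt_ge_zero real_sqrt_mult_self)
  have piP: "pik k \<le> P" for k
  proof -
    have vb: "norm (v k) \<le> K1 * Mb" and ub: "\<forall>i\<in>{1..n-1}. norm (u k i) \<le> K1 * Mb" using K1(2) Mb by blast+
    have "(norm (v k))\<^sup>2 \<le> (K1 * Mb)\<^sup>2" using vb by (intro power_mono) auto
    then have a: "(1/gamma) * (norm (v k))\<^sup>2 \<le> (1/gamma) * (K1 * Mb)\<^sup>2" using params by (intro mult_left_mono) auto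
    have "(\<Sum>i=1..n-1. (norm (u k i))\<^sup>2) \<le> (\<Sum>i=1..n-1. (K1 * Mb)\<^sup>2)"
      using ub by (intro sum_mono power_mono) auto
    then show ?thesis unfolding pi_def[rule_format] P_def using a by simp
  qed
  have partA: "\<exists>xi>0. \<forall>k. pik k \<le> xi\<^sup>2" using xi piP by (meson order_trans)
  obtain zs ws where sol: "is_sol zs ws" using sol_exists by blast
  define c where "c = tau_lo * (2 - tau_up)"
  have c0: "c > 0" unfolding c_def using params by simp
  define sk where "sk k = (if 0 < phi k then c * (phi k)\<^sup>2 / pik k else 0)" for k
  have sk0: "0 \<le> sk k" for k unfolding sk_def c_def using fejer_term_nonneg[of k] by simp
  have skN: "sk k \<le> NN zs ws k - NN zs ws (Suc k)" for k using fejer[OF sol, of k] unfolding sk_def c_def by linarith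
  have "(\<Sum>k<K. sk k) \<le> NN zs ws 0" for K
  proof -
    have "(\<Sum>k<K. sk k) \<le> (\<Sum>k<K. NN zs ws k - NN zs ws (Suc k))" by (intro sum_mono skN)
    also have "\<dots> = NN zs ws 0 - NN zs ws K" by (rule sum_lessThan_telescope')
    also have "\<dots> \<le> NN zs ws 0" using NN_nonneg[of zs ws K] by simp
    finally show ?thesis .
  qed
  then have "summable sk" using sk0 by (intro summableI_nonneg_bounded)
  then have sklim: "sk \<longlonglongrightarrow> 0" by (rule summable_LIMSEQ_zero)
  have phi2: "(phi k)\<^sup>2 \<le> (P / c) * sk k" for k
  proof (cases "0 < phi k")
    case True
    then have pp: "0 < pik k" using fejer[OF sol, of k] by blast
    have "(phi k)\<^sup>2 = pik k / c * sk k" using True pp c0 unfolding sk_def by (simp add: field_simps)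
    also have "\<dots> \<le> P / c * sk k" using piP[of k] c0 sk0[of k] by (intro mult_right_mono divide_right_mono) auto
    finally show ?thesis .
  next
    case False
    then have "phi k = 0" using phi_nonneg[of k] by simp
    then show ?thesis using P0 c0 sk0[of k] by simp
  qed
  have philim: "phi \<longlonglongrightarrow> 0"
  proof (rule null_cmp)
    show "norm (phi k) \<le> sqrt (P / c * sk k)" for k
      using phi2[of k] phi_nonneg[of k] by (simp add: real_le_rsqrt)
    have "(\<lambda>k. sqrt (P / c * sk k)) \<longlonglongrightarrow> sqrt (P / c * 0)" by (intro tendsto_intros sklim)
    then show "(\<lambda>k. sqrt (P / c * sk k)) \<longlonglongrightarrow> 0" by simp
  qed
  have d_le: "dst k i \<le> Rm * Mb" if i: "i \<in> {1..n}" for k i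
  proof -
    have rp: "0 < rho k i" using rho_pos[OF i] .
    have "dst k i = rho k i * (dst k i / rho k i)" using rp by simp
    also have "\<dots> \<le> Rm * Mb" using Mb i Rm rp Mb0 unfolding dst_def by (intro mult_mono) auto
    finally show ?thesis .
  qed
  obtain r0 where r0: "r0 > 0" "\<forall>i\<in>{1..n}. \<forall>k. dst k i \<le> Rm * Mb \<longrightarrow> r0 \<le> rho k i"
    using rho_lower[of "Rm * Mb"] Rm Mb0 by auto
  have dlim: "(\<lambda>k. dst k i) \<longlonglongrightarrow> 0" if i: "i \<in> {1..n}" for i
  proof (rule null_cmp)
    fix k
    have rp: "0 < rho k i" using rho_pos[OF i] .
    have nn: "\<forall>i\<in>{1..n}. 0 \<le> inner (G i (z k) - x k i) (y k i - w k i) - cr k i"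
    proof
      fix i assume i: "i \<in> {1..n}"
      have "0 \<le> \<kappa> * (dst k i)\<^sup>2 / rho k i" using kap(1) rho_pos[OF i, of k] by simp
      then show "0 \<le> inner (G i (z k) - x k i) (y k i - w k i) - cr k i" using kap(2) i by (meson order_trans)
    qed
    have "inner (G i (z k) - x k i) (y k i - w k i) - cr k i \<le> phi k"
      unfolding phi_eq using nn i by (intro member_le_sum) auto
    then have a: "\<kappa> * (dst k i)\<^sup>2 / rho k i \<le> phi k" using kap(2) i by (meson order_trans)
    have "\<kappa> * (dst k i)\<^sup>2 / Rm \<le> \<kappa> * (dst k i)\<^sup>2 / rho k i"
      using Rm i rp kap(1) by (intro divide_left_mono) auto
    then have "\<kappa> * (dst k i)\<^sup>2 / Rm \<le> phi k" using a by linarith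
    then have "(dst k i)\<^sup>2 \<le> Rm / \<kappa> * phi k" using Rm kap(1) by (simp add: field_simps)
    then show "norm (dst k i) \<le> sqrt (Rm / \<kappa> * phi k)" unfolding dst_def by (simp add: real_le_rsqrt)
  next
    have "(\<lambda>k. sqrt (Rm / \<kappa> * phi k)) \<longlonglongrightarrow> sqrt (Rm / \<kappa> * 0)" by (intro tendsto_intros philim)
    then show "(\<lambda>k. sqrt (Rm / \<kappa> * phi k)) \<longlonglongrightarrow> 0" by simp
  qed
  have rat: "dst k i / rho k i \<le> dst k i / r0" if i: "i \<in> {1..n}" for k i
    using r0 d_le[OF i, of k] i unfolding dst_def by (intro divide_left_mono) (auto simp: mult_pos_pos rho_pos)
  define S where "S k = (\<Sum>j=1..n. dst k j / r0)" for k
  have Slim: "S \<longlonglongrightarrow> 0"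
  proof -
    have "(\<lambda>k. \<Sum>j=1..n. dst k j / r0) \<longlonglongrightarrow> (\<Sum>j=1..n. 0 / r0)"
      using dlim r0(1) by (intro tendsto_sum tendsto_divide) auto
    then show ?thesis unfolding S_def by simp
  qed
  have ratS: "\<forall>i\<in>{1..n}. dst k i / rho k i \<le> S k" for k
  proof
    fix i assume i: "i \<in> {1..n}"
    have "dst k i / r0 \<le> S k" unfolding S_def using r0(1) i
      by (intro member_le_sum) (auto simp: dst_def)
    then show "dst k i / rho k i \<le> S k" using rat[OF i, of k] by linarith
  qed
  have partB: "\<forall>i\<in>{1..n}. (\<lambda>k. G i (z k) - x k i) \<longlonglongrightarrow> 0 \<and> (\<lambda>k. w k i - y k i) \<longlonglongrightarrow> 0"
  proof
    fix i assume i: "i \<in> {1..n}"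
    have "(\<lambda>k. G i (z k) - x k i) \<longlonglongrightarrow> 0"
      using dlim[OF i] unfolding dst_def by (simp add: tendsto_norm_zero_iff)
    moreover have "(\<lambda>k. w k i - y k i) \<longlonglongrightarrow> 0"
    proof (rule null_cmp)
      fix k show "norm (w k i - y k i) \<le> Ky * (dst k i / r0)"
        using Ky i rat[OF i, of k] by (smt (verit) mult_left_mono norm_minus_commute)
      have "(\<lambda>k. Ky * (dst k i / r0)) \<longlonglongrightarrow> Ky * (0 / r0)" using r0(1) by (intro tendsto_intros dlim[OF i]) auto
      then show "(\<lambda>k. Ky * (dst k i / r0)) \<longlonglongrightarrow> 0" by simp
    qed
    ultimately show "(\<lambda>k. G i (z k) - x k i) \<longlonglongrightarrow> 0 \<and> (\<lambda>k. w k i - y k i) \<longlonglongrightarrow> 0" ..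
  qed
  have KS: "(\<lambda>k. K1 * S k) \<longlonglongrightarrow> 0" using tendsto_mult_right_zero[OF Slim, of K1] by simp
  have partC: "(\<lambda>k. \<Sum>i=1..n. Gadj i (y k i)) \<longlonglongrightarrow> 0"
  proof (rule null_cmp)
    fix k show "norm (\<Sum>i=1..n. Gadj i (y k i)) \<le> K1 * S k" using K1(2) ratS[of k] v_def by metis
  qed (rule KS)
  have partD: "\<forall>i\<in>{1..n-1}. (\<lambda>k. x k i - G i (x k n)) \<longlonglongrightarrow> 0"
  proof
    fix i assume i: "i \<in> {1..n-1}"
    show "(\<lambda>k. x k i - G i (x k n)) \<longlonglongrightarrow> 0"
    proof (rule null_cmp)
      fix k show "norm (x k i - G i (x k n)) \<le> K1 * S k" using K1(2) ratS[of k] u_def i by metis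
    qed (rule KS)
  qed
  show ?thesis using partA partB partC partD by blast
qed

end

theorem lemma4p6:
  fixes n :: nat
    and H :: "nat \<Rightarrow> 'a::{real_inner,complete_space} set"
    and G Gadj :: "nat \<Rightarrow> 'a \<Rightarrow> 'a"
    and A :: "nat \<Rightarrow> 'a \<Rightarrow> 'a set"
    and B C D :: "nat \<Rightarrow> 'a \<Rightarrow> 'a"
    and D' :: "nat \<Rightarrow> 'a \<Rightarrow> 'a \<Rightarrow> 'a"
    and ell m :: "nat \<Rightarrow> real"
    and beta :: "nat \<Rightarrow> ereal"
    and ID :: "nat set"
    and z :: "nat \<Rightarrow> 'a"
    and w x y u :: "nat \<Rightarrow> nat \<Rightarrow> 'a"
    and rho :: "nat \<Rightarrow> nat \<Rightarrow> real"
    and v :: "nat \<Rightarrow> 'a"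
    and phi pik tau alpha :: "nat \<Rightarrow> real"
    and tau_lo tau_up theta_lo theta_up rho_hat delta_hat gamma :: real
  assumes n2: "n \<ge> 2"
    and H_sub: "\<forall>i\<le>n. subspace (H i) \<and> closed (H i)"
    and H_n: "H n = H 0"
    and A1: "\<forall>i\<in>{1..n}. bounded_linear (G i) \<and> G i ` H 0 \<subseteq> H i"
    and A1n: "\<forall>p\<in>H 0. G n p = p"
    and adj: "\<forall>i\<in>{1..n}. \<forall>q\<in>H i. Gadj i q \<in> H 0 \<and>
                (\<forall>p\<in>H 0. inner (Gadj i q) p = inner q (G i p))"
    and A2: "\<forall>i\<in>{1..n}. max_mono_op (H i) (A i)"
    and A3: "\<forall>i\<in>{1..n}. mono_fun (H i) (B i) \<and> 0 \<le> ell i \<and>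
                (\<forall>p\<in>H i. \<forall>q\<in>H i. norm (B i p - B i q) \<le> ell i * norm (p - q))"
    and A4: "\<forall>i\<in>{1..n}. 0 < beta i \<and> cocoercive (H i) (beta i) (C i)"
    and A5: "\<forall>i\<in>{1..n}. mono_fun (H i) (D i) \<and> 0 \<le> m i \<and>
                (\<forall>p\<in>H i. (D i has_derivative D' i p) (at p within H i)) \<and>
                (\<forall>p\<in>H i. \<forall>q\<in>H i. \<forall>h\<in>H i.
                    norm (D' i p h - D' i q h) \<le> m i * norm (p - q) * norm h)"
    and A6: "\<exists>zs\<in>H 0. \<exists>ws. (\<forall>i\<in>{1..n}. ws i \<in> op_sum (A i) (B i) (C i) (D i) (G i zs)) \<and>
                (\<Sum>i=1..n. Gadj i (ws i)) = 0"
    and A7: "ID \<subseteq> {1..n} \<and> (\<forall>i\<in>ID. 0 < m i) \<and>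
                (\<forall>i\<in>{1..n} - ID. m i = 0 \<and> (\<forall>p\<in>H i. D i p = 0))"
    and params: "0 < tau_lo \<and> tau_lo < tau_up \<and> tau_up < 2 \<and>
                 0 < theta_lo \<and> theta_lo < theta_up \<and> theta_up < 2 \<and>
                 0 < rho_hat \<and> 0 < delta_hat \<and> 0 < gamma"
    and init: "z 0 \<in> H 0 \<and> (\<forall>i\<in>{1..n-1}. w 0 i \<in> H i)"
    and w_n: "\<forall>k. w k n = - (\<Sum>i=1..n-1. Gadj i (w k i))"
    and case_i: "\<forall>k. \<forall>i\<in>{1..n}. w k i \<in> op_sum (A i) (B i) (C i) (D i) (G i (z k)) \<longrightarrow>
                   rho k i = rho_hat \<and> x k i = G i (z k) \<and> y k i = w k i"
    and case_ii: "\<forall>k. \<forall>i\<in>ID. w k i \<notin> op_sum (A i) (B i) (C i) (D i) (G i (z k)) \<longrightarrow>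
                   0 < rho k i \<and>
                   x k i \<in> resolvent (op_scale (rho k i) (op_add (A i) (lin_at (D i) (D' i) (G i (z k)))))
                      (G i (z k) + rho k i *\<^sub>R w k i - rho k i *\<^sub>R (B i (G i (z k)) + C i (G i (z k)))) \<and>
                   theta_lo \<le> 4 * (ell i)\<^sup>2 * (rho k i)\<^sup>2 + (real_of_ereal (inverse (beta i)) + delta_hat) * rho k i
                              + (m i * rho k i * norm (x k i - G i (z k)))\<^sup>2 \<and>
                   4 * (ell i)\<^sup>2 * (rho k i)\<^sup>2 + (real_of_ereal (inverse (beta i)) + delta_hat) * rho k i
                              + (m i * rho k i * norm (x k i - G i (z k)))\<^sup>2 \<le> theta_up \<and>
                   y k i = (1 / rho k i) *\<^sub>R (G i (z k) - x k i) + w k i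
                           + (B i (x k i) - B i (G i (z k)))
                           + (D i (x k i) - lin_at (D i) (D' i) (G i (z k)) (x k i))"
    and case_iii: "\<forall>k. \<forall>i\<in>{1..n} - ID. w k i \<notin> op_sum (A i) (B i) (C i) (D i) (G i (z k)) \<longrightarrow>
                   0 < rho k i \<and>
                   x k i \<in> resolvent (op_scale (rho k i) (A i))
                      (G i (z k) + rho k i *\<^sub>R w k i - rho k i *\<^sub>R (B i (G i (z k)) + C i (G i (z k)))) \<and>
                   y k i = (1 / rho k i) *\<^sub>R (G i (z k) - x k i) + w k i
                           + (B i (x k i) - B i (G i (z k)))"
    and u_def: "\<forall>k. \<forall>i\<in>{1..n-1}. u k i = x k i - G i (x k n)"
    and v_def: "\<forall>k. v k = (\<Sum>i=1..n. Gadj i (y k i))"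
    and phi_def: "\<forall>k. phi k = inner (z k) (v k) + (\<Sum>i=1..n-1. inner (w k i) (u k i))
                   - (\<Sum>i=1..n. inner (x k i) (y k i)
                        + real_of_ereal (1 / (4 * beta i)) * (norm (x k i - G i (z k)))\<^sup>2)"
    and pi_def: "\<forall>k. pik k = (1 / gamma) * (norm (v k))\<^sup>2 + (\<Sum>i=1..n-1. (norm (u k i))\<^sup>2)"
    and update: "\<forall>k. (0 < phi k \<longrightarrow>
                      tau_lo \<le> tau k \<and> tau k \<le> tau_up \<and> alpha k = tau k * phi k / pik k \<and>
                      z (Suc k) = z k - (alpha k / gamma) *\<^sub>R v k \<and>
                      (\<forall>i\<in>{1..n-1}. w (Suc k) i = w k i - alpha k *\<^sub>R u k i)) \<and>
                    (\<not> 0 < phi k \<longrightarrow> z (Suc k) = z k \<and> (\<forall>i\<in>{1..n-1}. w (Suc k) i = w k i))"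
    and A8: "\<forall>i\<in>{1..n} - ID. \<exists>rlo rup. 0 < rlo \<and> rlo \<le> rup \<and>
                ereal rup < 1 / (1 / (4 * beta i) + ereal (ell i)) \<and>
                (\<forall>k. w k i \<notin> op_sum (A i) (B i) (C i) (D i) (G i (z k)) \<longrightarrow>
                      rlo \<le> rho k i \<and> rho k i \<le> rup)"
  shows "(\<exists>xi>0. \<forall>k. pik k \<le> xi\<^sup>2) \<and>
         (\<forall>i\<in>{1..n}. (\<lambda>k. G i (z k) - x k i) \<longlonglongrightarrow> 0 \<and> (\<lambda>k. w k i - y k i) \<longlonglongrightarrow> 0) \<and>
         (\<lambda>k. \<Sum>i=1..n. Gadj i (y k i)) \<longlonglongrightarrow> 0 \<and>
         (\<forall>i\<in>{1..n-1}. (\<lambda>k. x k i - G i (x k n)) \<longlonglongrightarrow> 0)"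
proof -
  interpret P: PS n H G Gadj A B C D D' ell m beta ID z w x y u rho v phi pik tau alpha tau_lo tau_up theta_lo theta_up rho_hat delta_hat gamma
    by (rule PS.intro; fact assms)
  show ?thesis by (rule P.main_result)
qed

end
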